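(* $R_A$ is a simple $\mathbb Z^d$-graded $D(R_A)$-module (it has no nonzero proper $\mathbb Z^d$-graded $D(R_A)$-submodules) if and only if $\mathbb Q(A\cap\tau)\cap\mathbb Z^d=\mathbb Z(A\cap\tau)$ for all faces $\tau$ of the cone $\mathbb R_{\ge0}A$.
   Context: $A\subset\mathbb Z^d$ is a finite set generating the group $\mathbb Z^d$; $R_A=\mathbb C[\mathbb NA]=\bigoplus_{\mathbf a\in\mathbb NA}\mathbb Ct^{\mathbf a}\subseteq\mathbb C[t_1^{\pm1},\dots,t_d^{\pm1}]$, graded by $\mathbb Z^d$; $D(R_A)=\{P\in\mathbb C[t^{\pm1}]\langle\partial_1,\dots,\partial_d\rangle:P(R_A)\subseteq R_A\}$, acting on $R_A$. *)

theory Defs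
  imports Complex_Main
begin

(* Lattice points of Z^d: functions 'n => int, 'n a finite index type with d = CARD('n). *)

definition int_span :: "('n \<Rightarrow> int) set \<Rightarrow> ('n \<Rightarrow> int) set" where
  "int_span S = {v. \<exists>c :: ('n \<Rightarrow> int) \<Rightarrow> int. v = (\<lambda>i. \<Sum>a\<in>S. c a * a i)}"

definition nat_span :: "('n \<Rightarrow> int) set \<Rightarrow> ('n \<Rightarrow> int) set" where
  "nat_span S = {v. \<exists>c :: ('n \<Rightarrow> int) \<Rightarrow> nat. v = (\<lambda>i. \<Sum>a\<in>S. int (c a) * a i)}"

definition rat_span_lattice :: "('n \<Rightarrow> int) set \<Rightarrow> ('n \<Rightarrow> int) set" where
  "rat_span_lattice S = {v. \<exists>q :: ('n \<Rightarrow> int) \<Rightarrow> rat.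
        (\<lambda>i. of_int (v i)) = (\<lambda>i. \<Sum>a\<in>S. q a * of_int (a i))}"

definition real_cone :: "('n \<Rightarrow> int) set \<Rightarrow> ('n \<Rightarrow> real) set" where
  "real_cone A = {x. \<exists>l :: ('n \<Rightarrow> int) \<Rightarrow> real. (\<forall>a\<in>A. l a \<ge> 0) \<and>
        x = (\<lambda>i. \<Sum>a\<in>A. l a * of_int (a i))}"

definition is_face :: "('n::finite \<Rightarrow> real) set \<Rightarrow> ('n \<Rightarrow> real) set \<Rightarrow> bool" where
  "is_face C \<tau> \<longleftrightarrow> (\<exists>w :: 'n \<Rightarrow> real. (\<forall>x\<in>C. (\<Sum>i\<in>UNIV. w i * x i) \<ge> 0) \<and>
        \<tau> = {x\<in>C. (\<Sum>i\<in>UNIV. w i * x i) = 0})"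

definition real_pt :: "('n \<Rightarrow> int) \<Rightarrow> ('n \<Rightarrow> real)" where
  "real_pt a = (\<lambda>i. of_int (a i))"

(* Laurent polynomials C[t^{+-1}]: finitely supported coefficient functions Z^d -> C *)
definition laurent :: "(('n \<Rightarrow> int) \<Rightarrow> complex) set" where
  "laurent = {f. finite {m. f m \<noteq> 0}}"

(* The semigroup ring R_A = span of t^a, a in NA *)
definition semigroup_ring :: "('n \<Rightarrow> int) set \<Rightarrow> (('n \<Rightarrow> int) \<Rightarrow> complex) set" where
  "semigroup_ring A = {f \<in> laurent. \<forall>m. f m \<noteq> 0 \<longrightarrow> m \<in> nat_span A}"

definition ffact_int :: "int \<Rightarrow> nat \<Rightarrow> int" where
  "ffact_int x k = (\<Prod>j<k. x - int j)"

(* Differential operators in C[t^{+-1}]<d_1,...,d_d>: finitely supported coefficient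
   functions P with P = sum_{(a,b)} P(a,b) t^a d^b. *)
definition diff_ops :: "((('n \<Rightarrow> int) \<times> ('n \<Rightarrow> nat)) \<Rightarrow> complex) set" where
  "diff_ops = {P. finite {p. P p \<noteq> 0}}"

(* Action: t^a d^b (t^m) = (prod_i ff(m_i,b_i)) t^{a+m-b} *)
definition op_act :: "((('n::finite \<Rightarrow> int) \<times> ('n \<Rightarrow> nat)) \<Rightarrow> complex)
     \<Rightarrow> (('n \<Rightarrow> int) \<Rightarrow> complex) \<Rightarrow> (('n \<Rightarrow> int) \<Rightarrow> complex)" where
  "op_act P f = (\<lambda>m. \<Sum>p\<in>{p. P p \<noteq> 0}. \<Sum>u\<in>{u. f u \<noteq> 0}.
       (if (\<lambda>i. fst p i + u i - int (snd p i)) = m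
        then P p * of_int (\<Prod>i\<in>UNIV. ffact_int (u i) (snd p i)) * f u else 0))"

definition diff_ops_RA :: "('n::finite \<Rightarrow> int) set \<Rightarrow> ((('n \<Rightarrow> int) \<times> ('n \<Rightarrow> nat)) \<Rightarrow> complex) set" where
  "diff_ops_RA A = {P \<in> diff_ops. \<forall>f \<in> semigroup_ring A. op_act P f \<in> semigroup_ring A}"

definition graded_submodule :: "('n::finite \<Rightarrow> int) set \<Rightarrow> (('n \<Rightarrow> int) \<Rightarrow> complex) set \<Rightarrow> bool" where
  "graded_submodule A M \<longleftrightarrow> M \<subseteq> semigroup_ring A \<and> (\<lambda>_. 0) \<in> M \<and>
     (\<forall>f\<in>M. \<forall>g\<in>M. (\<lambda>m. f m + g m) \<in> M) \<and>
     (\<forall>P\<in>diff_ops_RA A. \<forall>f\<in>M. op_act P f \<in> M) \<and>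
     (\<forall>f\<in>M. \<forall>m. (\<lambda>x. if x = m then f m else 0) \<in> M)"

definition graded_simple :: "('n::finite \<Rightarrow> int) set \<Rightarrow> bool" where
  "graded_simple A \<longleftrightarrow> semigroup_ring A \<noteq> {\<lambda>_. 0} \<and>
     (\<forall>M. graded_submodule A M \<longrightarrow> M = {\<lambda>_. 0} \<or> M = semigroup_ring A)"

end

theory Submission
  imports Defs "HOL-Computational_Algebra.Polynomial" "HOL-Library.FuncSet"
begin


definition Dlt :: "('n \<Rightarrow> int) \<Rightarrow> ('n \<Rightarrow> int) \<Rightarrow> complex" where
  "Dlt u = (\<lambda>x. if x = u then 1 else 0)"

definition ffv :: "('n::finite \<Rightarrow> int) \<Rightarrow> ('n \<Rightarrow> nat) \<Rightarrow> int" where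
  "ffv x b = (\<Prod>i\<in>UNIV. ffact_int (x i) (b i))"

lemma op_act_swap:
  "op_act P f y = (\<Sum>u\<in>{u. f u \<noteq> 0}. f u * (\<Sum>p\<in>{p. P p \<noteq> 0}.
      if (\<lambda>i. fst p i + u i - int (snd p i)) = y then P p * of_int (ffv u (snd p)) else 0))"
  unfolding op_act_def ffv_def
  apply (subst sum.swap)
  apply (simp add: sum_distrib_left)
  apply (rule sum.cong, simp)+
  apply auto
  done

lemma op_act_nz:
  assumes "op_act P f y \<noteq> 0"
  shows "\<exists>p u. P p \<noteq> 0 \<and> f u \<noteq> 0 \<and> y = (\<lambda>i. fst p i + u i - int (snd p i))"
proof -
  obtain p where p: "p \<in> {p. P p \<noteq> 0}" and nz:
    "(\<Sum>u\<in>{u. f u \<noteq> 0}. (if (\<lambda>i. fst p i + u i - int (snd p i)) = y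
        then P p * of_int (\<Prod>i\<in>UNIV. ffact_int (u i) (snd p i)) * f u else 0)) \<noteq> 0"
    using assms unfolding op_act_def by (rule sum.not_neutral_contains_not_neutral)
  obtain u where "u \<in> {u. f u \<noteq> 0}" and "(if (\<lambda>i. fst p i + u i - int (snd p i)) = y
        then P p * of_int (\<Prod>i\<in>UNIV. ffact_int (u i) (snd p i)) * f u else 0) \<noteq> 0"
    using nz by (rule sum.not_neutral_contains_not_neutral)
  with p show ?thesis by (intro exI[of _ p] exI[of _ u]) (auto split: if_splits)
qed

lemma op_act_Dlt:
  assumes "finite {p. P p \<noteq> 0}"
  shows "op_act P (Dlt x) y = (\<Sum>p\<in>{p. P p \<noteq> 0}.
      if (\<lambda>i. fst p i + x i - int (snd p i)) = y then P p * of_int (ffv x (snd p)) else 0)"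
proof -
  have e: "{u. Dlt x u \<noteq> 0} = {x}" by (auto simp: Dlt_def)
  show ?thesis by (subst op_act_swap, subst e) (simp add: Dlt_def)
qed

lemma op_act_laurent:
  assumes "P \<in> diff_ops" "f \<in> laurent"
  shows "op_act P f \<in> laurent"
proof -
  let ?g = "\<lambda>(p::(('a\<Rightarrow>int)\<times>('a\<Rightarrow>nat)), u::('a\<Rightarrow>int)). (\<lambda>i. fst p i + u i - int (snd p i))"
  have "{y. op_act P f y \<noteq> 0} \<subseteq> ?g ` ({p. P p \<noteq> 0} \<times> {u. f u \<noteq> 0})"
    using op_act_nz by fastforce
  moreover have "finite (?g ` ({p. P p \<noteq> 0} \<times> {u. f u \<noteq> 0}))"
    using assms by (auto simp: diff_ops_def laurent_def)
  ultimately show ?thesis unfolding laurent_def using finite_subset by blast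
qed

lemma ns_add: "x \<in> nat_span F \<Longrightarrow> y \<in> nat_span F \<Longrightarrow> (\<lambda>i. x i + y i) \<in> nat_span F"
  unfolding nat_span_def
proof clarify
  fix c d :: "_ \<Rightarrow> nat"
  show "\<exists>e. (\<lambda>i. (\<Sum>a\<in>F. int (c a) * a i) + (\<Sum>a\<in>F. int (d a) * a i)) = (\<lambda>i. \<Sum>a\<in>F. int (e a) * a i)"
    by (rule exI[of _ "\<lambda>a. c a + d a"]) (simp add: sum.distrib algebra_simps)
qed

lemma ns_zero: "(\<lambda>i. 0) \<in> nat_span F"
  unfolding nat_span_def by (rule CollectI, rule exI[of _ "\<lambda>_. 0"]) simp

lemma ns_mem: "finite F \<Longrightarrow> a \<in> F \<Longrightarrow> a \<in> nat_span F"
  unfolding nat_span_def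
proof (rule CollectI, rule exI[of _ "\<lambda>b. if b = a then 1 else 0"], rule ext)
  fix i assume "finite F" "a \<in> F"
  have "(\<Sum>b\<in>F. int (if b = a then 1 else 0) * b i) = (\<Sum>b\<in>F. if b = a then a i else 0)"
    by (rule sum.cong) auto
  thus "a i = (\<Sum>b\<in>F. int (if b = a then 1 else 0) * b i)" using \<open>finite F\<close> \<open>a \<in> F\<close> by simp
qed

lemma ns_smult: "x \<in> nat_span F \<Longrightarrow> (\<lambda>i. int k * x i) \<in> nat_span F"
  unfolding nat_span_def
proof clarify
  fix c :: "_ \<Rightarrow> nat"
  show "\<exists>e. (\<lambda>i. int k * (\<Sum>a\<in>F. int (c a) * a i)) = (\<lambda>i. \<Sum>a\<in>F. int (e a) * a i)"
    by (rule exI[of _ "\<lambda>a. k * c a"]) (simp add: sum_distrib_left algebra_simps)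
qed

lemma ns_sum: "finite I \<Longrightarrow> (\<forall>j\<in>I. x j \<in> nat_span F) \<Longrightarrow> (\<lambda>i. \<Sum>j\<in>I. x j i) \<in> nat_span F"
proof (induct I rule: finite_induct)
  case empty thus ?case using ns_zero by simp
next
  case (insert j I)
  thus ?case using ns_add[of "x j" F "\<lambda>i. \<Sum>j\<in>I. x j i"] by simp
qed

lemma ns_mono: "finite A \<Longrightarrow> F \<subseteq> A \<Longrightarrow> x \<in> nat_span F \<Longrightarrow> x \<in> nat_span A"
  unfolding nat_span_def
proof clarify
  fix c :: "_ \<Rightarrow> nat"
  assume A: "finite A" "F \<subseteq> A"
  show "\<exists>e. (\<lambda>i. \<Sum>a\<in>F. int (c a) * a i) = (\<lambda>i. \<Sum>a\<in>A. int (e a) * a i)"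
  proof (rule exI[of _ "\<lambda>a. if a \<in> F then c a else 0"], rule ext)
    fix i
    show "(\<Sum>a\<in>F. int (c a) * a i) = (\<Sum>a\<in>A. int (if a \<in> F then c a else 0) * a i)"
    proof -
      have "(\<Sum>a\<in>A. int (if a \<in> F then c a else 0) * a i) = (\<Sum>a\<in>A. if a \<in> F then int (c a) * a i else 0)"
        by (rule sum.cong) auto
      also have "\<dots> = (\<Sum>a\<in>A \<inter> F. int (c a) * a i)" using A by (simp add: sum.inter_restrict)
      finally show ?thesis using A by (simp add: Int_absorb1)
    qed
  qed
qed

lemma ns_int: "x \<in> nat_span F \<Longrightarrow> x \<in> int_span F"
  unfolding nat_span_def int_span_def by auto

lemma is_sub: "x \<in> int_span F \<Longrightarrow> y \<in> int_span F \<Longrightarrow> (\<lambda>i. x i - y i) \<in> int_span F"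
  unfolding int_span_def
proof clarify
  fix c d :: "_ \<Rightarrow> int"
  show "\<exists>e. (\<lambda>i. (\<Sum>a\<in>F. c a * a i) - (\<Sum>a\<in>F. d a * a i)) = (\<lambda>i. \<Sum>a\<in>F. e a * a i)"
    by (rule exI[of _ "\<lambda>a. c a - d a"]) (simp add: sum_subtractf algebra_simps)
qed

lemma is_rs: "x \<in> int_span F \<Longrightarrow> x \<in> rat_span_lattice F"
  unfolding int_span_def rat_span_lattice_def
proof clarify
  fix c :: "_ \<Rightarrow> int"
  show "\<exists>q. (\<lambda>i. rat_of_int (\<Sum>a\<in>F. c a * a i)) = (\<lambda>i. \<Sum>a\<in>F. q a * rat_of_int (a i))"
    by (rule exI[of _ "\<lambda>a. of_int (c a)"]) simp
qed



definition pf :: "(('n::finite \<Rightarrow> int) \<Rightarrow> complex) \<Rightarrow> bool" where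
  "pf \<phi> \<longleftrightarrow> (\<exists>Bs c. finite Bs \<and> \<phi> = (\<lambda>x. \<Sum>b\<in>Bs. c b * of_int (ffv x b)))"

lemma pf_D: assumes "pf \<phi>" shows "\<exists>Bs c. finite Bs \<and> \<phi> = (\<lambda>x. \<Sum>b\<in>Bs. c b * of_int (ffv x b))"
  using assms unfolding pf_def .

lemma pf_I: "finite Bs \<Longrightarrow> \<phi> = (\<lambda>x. \<Sum>b\<in>Bs. c b * of_int (ffv x b)) \<Longrightarrow> pf \<phi>"
  unfolding pf_def by (intro exI conjI)

lemma pf_mono: "pf (\<lambda>x. k * of_int (ffv x b))"
  unfolding pf_def by (rule exI[of _ "{b}"], rule exI[of _ "\<lambda>_. k"]) simp

lemma pf_zero: "pf (\<lambda>x. 0)"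
  unfolding pf_def by (rule exI[of _ "{}"]) simp

lemma pf_add:
  assumes "pf \<phi>" "pf \<psi>" shows "pf (\<lambda>x. \<phi> x + \<psi> x)"
proof -
  obtain Bs c where B: "finite Bs" "\<phi> = (\<lambda>x. \<Sum>b\<in>Bs. c b * of_int (ffv x b))" using pf_D[OF assms(1)] by (elim exE conjE)
  obtain Bs' c' where B': "finite Bs'" "\<psi> = (\<lambda>x. \<Sum>b\<in>Bs'. c' b * of_int (ffv x b))" using pf_D[OF assms(2)] by (elim exE conjE)
  let ?U = "Bs \<union> Bs'"
  let ?c = "\<lambda>b. (if b \<in> Bs then c b else 0) + (if b \<in> Bs' then c' b else 0)"
  have "(\<lambda>x. \<phi> x + \<psi> x) = (\<lambda>x. \<Sum>b\<in>?U. ?c b * of_int (ffv x b))"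
  proof
    fix x
    have "(\<Sum>b\<in>?U. ?c b * of_int (ffv x b)) = (\<Sum>b\<in>?U. (if b \<in> Bs then c b * of_int (ffv x b) else 0))
        + (\<Sum>b\<in>?U. (if b \<in> Bs' then c' b * of_int (ffv x b) else 0))"
      by (simp add: sum.distrib[symmetric] distrib_right) (rule sum.cong; simp)
    also have "\<dots> = (\<Sum>b\<in>?U \<inter> Bs. c b * of_int (ffv x b)) + (\<Sum>b\<in>?U \<inter> Bs'. c' b * of_int (ffv x b))"
      using B B' by (simp only: sum.inter_restrict[symmetric] finite_UnI)
    also have "?U \<inter> Bs = Bs" by blast
    also have "?U \<inter> Bs' = Bs'" by blast
    finally show "\<phi> x + \<psi> x = (\<Sum>b\<in>?U. ?c b * of_int (ffv x b))" using B B' by simp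
  qed
  thus ?thesis using B B' by (intro pf_I[of ?U _ ?c]) auto
qed

lemma pf_sum: "finite I \<Longrightarrow> (\<forall>i\<in>I. pf (\<phi> i)) \<Longrightarrow> pf (\<lambda>x. \<Sum>i\<in>I. \<phi> i x)"
proof (induct I rule: finite_induct)
  case empty thus ?case using pf_zero by simp
next
  case (insert j I)
  thus ?case using pf_add[of "\<phi> j" "\<lambda>x. \<Sum>i\<in>I. \<phi> i x"] by simp
qed

lemma pf_cmult: "pf \<phi> \<Longrightarrow> pf (\<lambda>x. k * \<phi> x)"
proof -
  assume "pf \<phi>"
  then obtain Bs c where B: "finite Bs" "\<phi> = (\<lambda>x. \<Sum>b\<in>Bs. c b * of_int (ffv x b))" using pf_D by blast
  have "(\<lambda>x. k * \<phi> x) = (\<lambda>x. \<Sum>b\<in>Bs. (k * c b) * of_int (ffv x b))"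
    using B by (simp add: sum_distrib_left mult.assoc)
  thus ?thesis using B by (intro pf_I[of Bs _ "\<lambda>b. k * c b"]) auto
qed

lemma ffact_Suc: "ffact_int z (Suc k) = ffact_int z k * (z - int k)"
  unfolding ffact_int_def by simp

lemma ffv_coord: "x j * ffv x b = ffv x (b(j := Suc (b j))) + int (b j) * ffv x b"
proof -
  have r: "ffv x b' = ffact_int (x j) (b' j) * (\<Prod>i\<in>UNIV-{j}. ffact_int (x i) (b' i))" for b'
    unfolding ffv_def by (simp add: prod.remove)
  have e: "(\<Prod>i\<in>UNIV-{j}. ffact_int (x i) ((b(j := Suc (b j))) i)) = (\<Prod>i\<in>UNIV-{j}. ffact_int (x i) (b i))"
    by (rule prod.cong) auto
  show ?thesis
    apply (subst (1 2 3) r)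
    apply (simp only: e)
    apply (simp add: ffact_Suc algebra_simps)
    done
qed

lemma pf_coord: "pf \<phi> \<Longrightarrow> pf (\<lambda>x. of_int (x j) * \<phi> x)"
proof -
  assume "pf \<phi>"
  then obtain Bs c where B: "finite Bs" "\<phi> = (\<lambda>x. \<Sum>b\<in>Bs. c b * of_int (ffv x b))" using pf_D by blast
  have "(\<lambda>x. of_int (x j) * \<phi> x) = (\<lambda>x. \<Sum>b\<in>Bs. (c b * of_int (ffv x (b(j := Suc (b j)))) +
        (c b * of_nat (b j)) * of_int (ffv x b)))"
  proof
    fix x
    have "of_int (x j) * \<phi> x = (\<Sum>b\<in>Bs. c b * of_int (x j * ffv x b))"
      using B by (simp add: sum_distrib_left algebra_simps)
    also have "\<dots> = (\<Sum>b\<in>Bs. (c b * of_int (ffv x (b(j := Suc (b j)))) + (c b * of_nat (b j)) * of_int (ffv x b)))"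
      by (rule sum.cong, simp, subst ffv_coord) (simp add: algebra_simps)
    finally show "of_int (x j) * \<phi> x = \<dots>" .
  qed
  moreover have "pf (\<lambda>x. \<Sum>b\<in>Bs. (c b * of_int (ffv x (b(j := Suc (b j)))) + (c b * of_nat (b j)) * of_int (ffv x b)))"
    using B(1) by (intro pf_sum ballI pf_add pf_mono)
  ultimately show ?thesis by simp
qed

lemma pf_affine: "pf \<phi> \<Longrightarrow> pf (\<lambda>x. (c0 + (\<Sum>j\<in>UNIV. cj j * of_int (x j))) * \<phi> x)"
proof -
  assume p: "pf \<phi>"
  have "(\<lambda>x. (c0 + (\<Sum>j\<in>UNIV. cj j * of_int (x j))) * \<phi> x) =
        (\<lambda>x. c0 * \<phi> x + (\<Sum>j\<in>UNIV. cj j * (of_int (x j) * \<phi> x)))"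
    by (simp add: distrib_right sum_distrib_right mult.assoc)
  moreover have "pf (\<lambda>x. c0 * \<phi> x + (\<Sum>j\<in>UNIV. cj j * (of_int (x j) * \<phi> x)))"
    using p by (intro pf_add pf_cmult pf_sum ballI pf_coord) auto
  ultimately show ?thesis by simp
qed

lemma ffv_zero: "ffv x (\<lambda>_. 0) = 1"
  unfolding ffv_def ffact_int_def by simp

lemma pf_prod: "finite I \<Longrightarrow> pf (\<lambda>x. \<Prod>\<iota>\<in>I. (c0 \<iota> + (\<Sum>j\<in>UNIV. cj \<iota> j * of_int (x j))))"
proof (induct I rule: finite_induct)
  case empty
  have "pf (\<lambda>x. 1 * of_int (ffv x (\<lambda>_. 0)))" by (rule pf_mono)
  thus ?case by (simp add: ffv_zero)
next
  case (insert k I)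
  thus ?case using pf_affine[of "\<lambda>x. \<Prod>\<iota>\<in>I. (c0 \<iota> + (\<Sum>j\<in>UNIV. cj \<iota> j * of_int (x j)))" "c0 k" "cj k"]
    by simp
qed

lemma pf_line:
  assumes "pf \<phi>"
  shows "\<exists>pol. \<forall>t::int. \<phi> (\<lambda>i. u i + t * z i) = poly pol (of_int t)"
proof -
  obtain Bs c where B: "finite Bs" "\<phi> = (\<lambda>x. \<Sum>b\<in>Bs. c b * of_int (ffv x b))" using pf_D[OF assms] by (elim exE conjE)
  let ?pol = "\<Sum>b\<in>Bs. smult (c b) (\<Prod>i\<in>UNIV. \<Prod>j\<in>{..<b i}. [:of_int (u i - int j), of_int (z i):])"
  have "\<phi> (\<lambda>i. u i + t * z i) = poly ?pol (of_int t)" for t :: int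
    unfolding B(2) ffv_def ffact_int_def
    by (simp add: poly_sum poly_prod algebra_simps)
  thus ?thesis by blast
qed

lemma pf_line_zero:
  assumes "pf \<phi>" "infinite T" "\<forall>t\<in>T. \<phi> (\<lambda>i. u i + t * z i) = 0"
  shows "\<phi> u = 0"
proof -
  obtain pol where pol: "\<forall>t::int. \<phi> (\<lambda>i. u i + t * z i) = poly pol (of_int t)"
    using pf_line[OF assms(1)] by blast
  have "of_int ` T \<subseteq> {x. poly pol x = 0}" using assms(3) pol by auto
  moreover have "infinite (of_int ` T :: complex set)"
    using assms(2) by (metis finite_imageD inj_onI of_int_eq_iff)
  ultimately have "pol = 0" using poly_roots_finite finite_subset by blast
  hence "\<phi> (\<lambda>i. u i + 0 * z i) = 0" using pol by (metis of_int_0 poly_0)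
  thus ?thesis by simp
qed



lemma common_denom:
  fixes X :: "rat set"
  assumes "finite X"
  shows "\<exists>D::nat. D > 0 \<and> (\<forall>x\<in>X. \<exists>k::int. of_nat D * x = of_int k)"
  using assms
proof (induct X rule: finite_induct)
  case empty show ?case by (rule exI[of _ 1]) simp
next
  case (insert x X)
  then obtain D where D: "D > 0" "\<forall>y\<in>X. \<exists>k::int. of_nat D * y = of_int k" by blast
  obtain n d where nd: "quotient_of x = (n, d)" by (cases "quotient_of x")
  have d: "d > 0" using quotient_of_denom_pos[OF nd] .
  have xe: "x = of_int n / of_int d" using quotient_of_div[OF nd] .
  let ?D = "D * nat d"
  have "?D > 0" using D d by simp
  moreover have "\<exists>k::int. of_nat ?D * y = of_int k" if yin: "y \<in> insert x X" for y
  proof (cases "y = x")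
    case True
    have "of_nat ?D * y = of_int (int D * n)" using d True xe by (simp add: field_simps)
    thus ?thesis by blast
  next
    case False
    then obtain k where "of_nat D * y = of_int k" using D(2) yin False by auto
    hence "of_nat ?D * y = of_int (k * d)" using d by (simp add: field_simps)
    thus ?thesis by blast
  qed
  ultimately show ?case by blast
qed

lemma Dlt_RA: "u \<in> nat_span A \<Longrightarrow> Dlt u \<in> semigroup_ring A"
  unfolding semigroup_ring_def laurent_def Dlt_def by (auto split: if_splits)

lemma op_act_Dlt_shift:
  assumes "finite {p. P p \<noteq> 0}"
  shows "op_act P (Dlt x) (\<lambda>i. x i + c i) = (\<Sum>p\<in>{p. P p \<noteq> 0}.
      (if (\<lambda>i. fst p i - int (snd p i)) = c then P p else 0) * of_int (ffv x (snd p)))"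
  unfolding op_act_Dlt[OF assms]
proof (rule sum.cong, simp)
  fix p :: "('a \<Rightarrow> int) \<times> ('a \<Rightarrow> nat)"
  have "((\<lambda>i. fst p i + x i - int (snd p i)) = (\<lambda>i. x i + c i)) = ((\<lambda>i. fst p i - int (snd p i)) = c)"
    by (auto simp: fun_eq_iff algebra_simps)
  thus "(if (\<lambda>i. fst p i + x i - int (snd p i)) = (\<lambda>i. x i + c i) then P p * of_int (ffv x (snd p)) else 0) =
    (if (\<lambda>i. fst p i - int (snd p i)) = c then P p else 0) * of_int (ffv x (snd p))" by simp
qed

lemma pf_op_act_shift:
  assumes "finite {p. P p \<noteq> 0}"
  shows "pf (\<lambda>x. op_act P (Dlt x) (\<lambda>i. x i + c i))"
  unfolding op_act_Dlt_shift[OF assms]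
  using assms by (intro pf_sum ballI pf_mono)

lemma op_act_support:
  assumes "op_act P f m \<noteq> 0" "finite {p. P p \<noteq> 0}"
  shows "\<exists>u. f u \<noteq> 0 \<and> op_act P (Dlt u) m \<noteq> 0"
proof -
  from assms(1) obtain u where "u \<in> {u. f u \<noteq> 0}" and nz: "f u * (\<Sum>p\<in>{p. P p \<noteq> 0}.
      if (\<lambda>i. fst p i + u i - int (snd p i)) = m then P p * of_int (ffv u (snd p)) else 0) \<noteq> 0"
    unfolding op_act_swap by (rule sum.not_neutral_contains_not_neutral)
  thus ?thesis using op_act_Dlt[OF assms(2), of u m] by auto
qed

lemma sum_swap_lin:
  fixes w :: "'i \<Rightarrow> 'r::comm_semiring_1"
  shows "(\<Sum>i\<in>I. w i * (\<Sum>a\<in>X. c a * f a i)) = (\<Sum>a\<in>X. c a * (\<Sum>i\<in>I. w i * f a i))"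
  by (simp add: sum_distrib_left mult.left_commute) (rule sum.swap)

definition rdot :: "('n::finite \<Rightarrow> real) \<Rightarrow> ('n \<Rightarrow> int) \<Rightarrow> real" where
  "rdot w a = (\<Sum>i\<in>UNIV. w i * of_int (a i))"

lemma face_S:
  assumes A: "finite A" and w: "\<forall>a\<in>A. rdot w a \<ge> 0"
    and g: "g \<in> nat_span A" "g \<in> rat_span_lattice {a\<in>A. rdot w a = 0}"
  shows "g \<in> int_span {a\<in>A. rdot w a = 0}"
proof -
  let ?F = "{a\<in>A. rdot w a = 0}"
  obtain n where n: "g = (\<lambda>i. \<Sum>a\<in>A. int (n a) * a i)" using g(1) unfolding nat_span_def by blast
  obtain q where q: "(\<lambda>i. rat_of_int (g i)) = (\<lambda>i. \<Sum>a\<in>?F. q a * rat_of_int (a i))"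
    using g(2) unfolding rat_span_lattice_def by blast
  have gr: "real_of_int (g i) = (\<Sum>a\<in>?F. real_of_rat (q a) * real_of_int (a i))" for i
  proof -
    have "real_of_int (g i) = real_of_rat (rat_of_int (g i))" by simp
    also have "\<dots> = real_of_rat (\<Sum>a\<in>?F. q a * rat_of_int (a i))" using q by (metis)
    also have "\<dots> = (\<Sum>a\<in>?F. real_of_rat (q a) * real_of_int (a i))" by (simp add: of_rat_sum of_rat_mult)
    finally show ?thesis .
  qed
  have "rdot w g = (\<Sum>a\<in>?F. real_of_rat (q a) * rdot w a)"
    unfolding rdot_def gr by (rule sum_swap_lin)
  also have "\<dots> = 0" by simp
  finally have z: "rdot w g = 0" .
  have "rdot w g = (\<Sum>a\<in>A. real (n a) * rdot w a)"
    unfolding rdot_def n using sum_swap_lin[where w=w and I=UNIV and c="\<lambda>a. real (n a)" and X=A and f="\<lambda>a i. real_of_int (a i)"] by simp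
  with z have "\<forall>a\<in>A. real (n a) * rdot w a = 0"
    using sum_nonneg_eq_0_iff[OF A, of "\<lambda>a. real (n a) * rdot w a"] w by auto
  hence n0: "\<forall>a\<in>A - ?F. n a = 0" by auto
  have "g = (\<lambda>i. \<Sum>a\<in>?F. int (n a) * a i)"
  proof
    fix i
    have "(\<Sum>a\<in>A. int (n a) * a i) = (\<Sum>a\<in>?F. int (n a) * a i)"
      using A n0 by (intro sum.mono_neutral_right) auto
    thus "g i = (\<Sum>a\<in>?F. int (n a) * a i)" using n by simp
  qed
  thus ?thesis unfolding int_span_def by (intro CollectI exI[of _ "\<lambda>a. int (n a)"])
qed



lemma SR_iff: "f \<in> semigroup_ring A \<longleftrightarrow> finite {m. f m \<noteq> 0} \<and> (\<forall>m. f m \<noteq> 0 \<longrightarrow> m \<in> nat_span A)"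
  unfolding semigroup_ring_def laurent_def by auto

lemma T0_closed:
  fixes A F :: "('n::finite \<Rightarrow> int) set"
  assumes A: "finite A" and FA: "F \<subseteq> A"
    and gL': "g \<in> rat_span_lattice F" and gL: "g \<notin> int_span F"
    and ug: "(\<lambda>i. u i + g i) \<in> nat_span A"
    and P: "P \<in> diff_ops_RA A" and nz: "op_act P (Dlt u) v \<noteq> 0"
  shows "\<exists>g'. g' \<in> rat_span_lattice F \<and> g' \<notin> int_span F \<and> (\<lambda>i. v i + g' i) \<in> nat_span A"
proof (rule ccontr)
  assume H: "\<not> ?thesis"
  have F: "finite F" using A FA finite_subset by blast
  have Pfin: "finite {p. P p \<noteq> 0}" using P unfolding diff_ops_RA_def diff_ops_def by auto
  obtain q where q: "(\<lambda>i. rat_of_int (g i)) = (\<lambda>i. \<Sum>a\<in>F. q a * rat_of_int (a i))"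
    using gL' unfolding rat_span_lattice_def by blast
  obtain D where D: "D > 0" "\<forall>x\<in>q ` F. \<exists>k::int. of_nat D * x = of_int k"
    using common_denom[of "q ` F"] F by auto
  define n where "n a = (SOME k::int. of_nat D * q a = of_int k)" for a
  have n: "of_nat D * q a = of_int (n a)" if "a \<in> F" for a
  proof -
    have "\<exists>k::int. of_nat D * q a = of_int k" using D(2) that by auto
    thus ?thesis unfolding n_def by (rule someI_ex)
  qed
  have Dg: "int D * g i = (\<Sum>a\<in>F. n a * a i)" for i
  proof -
    have "rat_of_int (int D * g i) = of_nat D * (\<Sum>a\<in>F. q a * rat_of_int (a i))"
      using fun_cong[OF q, of i] by simp
    also have "\<dots> = (\<Sum>a\<in>F. (of_nat D * q a) * rat_of_int (a i))" by (simp add: sum_distrib_left mult.assoc)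
    also have "\<dots> = (\<Sum>a\<in>F. rat_of_int (n a * a i))" by (rule sum.cong) (auto simp: n)
    also have "\<dots> = rat_of_int (\<Sum>a\<in>F. n a * a i)" by simp
    finally show ?thesis by (simp only: of_int_eq_iff)
  qed
  define M0 where "M0 = (\<Sum>a\<in>F. \<bar>n a\<bar>)"
  have M0: "\<bar>n a\<bar> \<le> M0" if "a \<in> F" for a
    unfolding M0_def using F that by (intro member_le_sum) auto
  have M0pos: "M0 \<ge> 0" unfolding M0_def by (intro sum_nonneg) auto
  define z where "z = (\<lambda>i. g i + (\<Sum>a\<in>F. M0 * a i))"
  define c where "c = (\<lambda>i. v i - u i)"
  let ?T = "(\<lambda>j::nat. 1 + int j * int D) ` UNIV"
  have inf: "infinite ?T"
  proof -
    have "inj (\<lambda>j::nat. 1 + int j * int D)" using D(1) by (auto simp: inj_on_def)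
    thus ?thesis by (metis finite_imageD infinite_UNIV_nat)
  qed
  have zero: "op_act P (Dlt (\<lambda>i. u i + t * z i)) (\<lambda>i. (u i + t * z i) + c i) = 0" if "t \<in> ?T" for t
  proof -
    obtain j where t: "t = 1 + int j * int D" using \<open>t \<in> ?T\<close> by blast
    define cf where "cf a = nat (int j * n a + t * M0)" for a
    have cfe: "int (cf a) = int j * n a + t * M0" if "a \<in> F" for a
    proof -
      have "- (int j * n a) \<le> int j * \<bar>n a\<bar>"
        by (metis abs_ge_minus_self abs_mult abs_of_nat)
      moreover have "int j * \<bar>n a\<bar> \<le> int j * M0" using M0[OF that] by (simp add: mult_left_mono)
      moreover have "int j * 1 \<le> int j * int D" using D(1) by (intro mult_left_mono) auto
      hence "int j \<le> t" using t by simp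
      hence "int j * M0 \<le> t * M0" using M0pos by (simp add: mult_right_mono)
      ultimately show ?thesis unfolding cf_def by simp
    qed
    have wg: "(\<lambda>i. t * z i - g i) = (\<lambda>i. \<Sum>a\<in>F. int (cf a) * a i)"
    proof
      fix i
      have "t * z i - g i = int j * (int D * g i) + (\<Sum>a\<in>F. t * M0 * a i)"
        unfolding z_def t by (simp add: algebra_simps sum_distrib_left)
      also have "\<dots> = (\<Sum>a\<in>F. (int j * n a + t * M0) * a i)"
        by (simp add: Dg sum_distrib_left sum.distrib algebra_simps)
      also have "\<dots> = (\<Sum>a\<in>F. int (cf a) * a i)" by (rule sum.cong) (auto simp: cfe)
      finally show "t * z i - g i = (\<Sum>a\<in>F. int (cf a) * a i)" .
    qed
    hence wgS: "(\<lambda>i. t * z i - g i) \<in> nat_span F" unfolding nat_span_def by blast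
    have xS: "(\<lambda>i. u i + t * z i) \<in> nat_span A"
      using ns_add[OF ug ns_mono[OF A FA wgS]] by simp
    have wL': "(\<lambda>i. t * z i) \<in> rat_span_lattice F"
    proof -
      have "rat_of_int (t * z i) = (\<Sum>a\<in>F. (of_int t * q a + of_int (t * M0)) * rat_of_int (a i))" for i
      proof -
        have "rat_of_int (t * z i) = of_int t * rat_of_int (g i) + of_int t * (\<Sum>a\<in>F. of_int M0 * rat_of_int (a i))"
          unfolding z_def by (simp add: algebra_simps)
        also have "\<dots> = of_int t * (\<Sum>a\<in>F. q a * rat_of_int (a i)) + of_int t * (\<Sum>a\<in>F. of_int M0 * rat_of_int (a i))"
          using fun_cong[OF q, of i] by simp
        also have "\<dots> = (\<Sum>a\<in>F. (of_int t * q a + of_int (t * M0)) * rat_of_int (a i))"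
          by (simp add: sum_distrib_left sum.distrib[symmetric] algebra_simps)
        finally show ?thesis .
      qed
      thus ?thesis unfolding rat_span_lattice_def
        by (intro CollectI exI[of _ "\<lambda>a. of_int t * q a + of_int (t * M0)"]) (simp add: fun_eq_iff)
    qed
    have wL: "(\<lambda>i. t * z i) \<notin> int_span F"
    proof
      assume "(\<lambda>i. t * z i) \<in> int_span F"
      from is_sub[OF this ns_int[OF wgS]] have "g \<in> int_span F" by simp
      with gL show False by simp
    qed
    have "(\<lambda>i. v i + t * z i) \<notin> nat_span A" using H wL' wL by blast
    moreover have "op_act P (Dlt (\<lambda>i. u i + t * z i)) \<in> semigroup_ring A"
      using P Dlt_RA[OF xS] unfolding diff_ops_RA_def by blast
    moreover have "(\<lambda>i. (u i + t * z i) + c i) = (\<lambda>i. v i + t * z i)" unfolding c_def by auto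
    ultimately show ?thesis unfolding SR_iff by metis
  qed
  have "op_act P (Dlt u) (\<lambda>i. u i + c i) = 0"
    using pf_line_zero[OF pf_op_act_shift[OF Pfin, of c] inf] zero by blast
  moreover have "(\<lambda>i. u i + c i) = v" unfolding c_def by auto
  ultimately show False using nz by simp
qed

lemma not_simple:
  fixes A :: "('n::finite \<Rightarrow> int) set"
  assumes A: "finite A" and span: "int_span A = UNIV"
    and w: "\<forall>a\<in>A. rdot w a \<ge> 0"
    and neq: "rat_span_lattice {a\<in>A. rdot w a = 0} \<noteq> int_span {a\<in>A. rdot w a = 0}"
  shows "\<not> graded_simple A"
proof
  assume gs: "graded_simple A"
  let ?F = "{a\<in>A. rdot w a = 0}"
  let ?S = "nat_span A"
  define T0 where "T0 = {u\<in>?S. \<exists>g. g \<in> rat_span_lattice ?F \<and> g \<notin> int_span ?F \<and> (\<lambda>i. u i + g i) \<in> ?S}"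
  define M where "M = {f \<in> semigroup_ring A. \<forall>m. f m \<noteq> 0 \<longrightarrow> m \<in> T0}"
  obtain g where g: "g \<in> rat_span_lattice ?F" "g \<notin> int_span ?F" using neq is_rs by blast
  have "g \<in> int_span A" using span by simp
  then obtain cc where cc: "g = (\<lambda>i. \<Sum>a\<in>A. cc a * a i)" unfolding int_span_def by blast
  define q0 where "q0 = (\<lambda>i. \<Sum>a\<in>A. int (nat (- cc a)) * a i)"
  have q0S: "q0 \<in> ?S" unfolding q0_def nat_span_def by (rule CollectI, rule exI[of _ "\<lambda>a. nat (- cc a)"], simp)
  have "(\<lambda>i. q0 i + g i) = (\<lambda>i. \<Sum>a\<in>A. int (nat (cc a)) * a i)"
  proof
    fix i
    have "q0 i + g i = (\<Sum>a\<in>A. int (nat (- cc a)) * a i + cc a * a i)"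
      unfolding q0_def cc by (simp add: sum.distrib)
    also have "\<dots> = (\<Sum>a\<in>A. int (nat (cc a)) * a i)"
      by (rule sum.cong) (auto simp: algebra_simps)
    finally show "q0 i + g i = (\<Sum>a\<in>A. int (nat (cc a)) * a i)" .
  qed
  hence q0g: "(\<lambda>i. q0 i + g i) \<in> ?S" unfolding nat_span_def by (intro CollectI exI[of _ "\<lambda>a. nat (cc a)"])
  have q0T: "q0 \<in> T0" unfolding T0_def using q0S q0g g by blast
  have zT: "(\<lambda>_. 0) \<notin> T0"
  proof
    assume "(\<lambda>_. 0) \<in> T0"
    then obtain g' where g': "g' \<in> rat_span_lattice ?F" "g' \<notin> int_span ?F" "(\<lambda>i. 0 + g' i) \<in> ?S"
      unfolding T0_def by blast
    have "g' \<in> ?S" using g'(3) by simp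
    from face_S[OF A w this g'(1)] g'(2) show False by simp
  qed
  have sub: "graded_submodule A M"
    unfolding graded_submodule_def
  proof (intro conjI ballI allI)
    show "M \<subseteq> semigroup_ring A" unfolding M_def by blast
    show "(\<lambda>_. 0) \<in> M" unfolding M_def SR_iff by simp
  next
    fix f g assume f: "f \<in> M" and g: "g \<in> M"
    have "{m. f m + g m \<noteq> 0} \<subseteq> {m. f m \<noteq> 0} \<union> {m. g m \<noteq> 0}" by auto
    moreover have "finite ({m. f m \<noteq> 0} \<union> {m. g m \<noteq> 0})" using f g unfolding M_def SR_iff by auto
    ultimately have "finite {m. f m + g m \<noteq> 0}" using finite_subset by blast
    moreover have "f m + g m \<noteq> 0 \<Longrightarrow> m \<in> nat_span A \<and> m \<in> T0" for m
      using f g unfolding M_def SR_iff by (cases "f m = 0") auto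
    ultimately show "(\<lambda>m. f m + g m) \<in> M" unfolding M_def SR_iff by auto
  next
    fix P f assume P: "P \<in> diff_ops_RA A" and f: "f \<in> M"
    have Pfin: "finite {p. P p \<noteq> 0}" using P unfolding diff_ops_RA_def diff_ops_def by auto
    have fR: "f \<in> semigroup_ring A" using f unfolding M_def by blast
    have oR: "op_act P f \<in> semigroup_ring A" using P fR unfolding diff_ops_RA_def by blast
    have "m \<in> T0" if m: "op_act P f m \<noteq> 0" for m
    proof -
      obtain u where u: "f u \<noteq> 0" "op_act P (Dlt u) m \<noteq> 0" using op_act_support[OF m Pfin] by blast
      have uT: "u \<in> T0" using f u(1) unfolding M_def by blast
      then obtain g where gg: "g \<in> rat_span_lattice ?F" "g \<notin> int_span ?F" "(\<lambda>i. u i + g i) \<in> ?S"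
        unfolding T0_def by blast
      have uS: "u \<in> ?S" using uT unfolding T0_def by blast
      have "op_act P (Dlt u) \<in> semigroup_ring A" using P Dlt_RA[OF uS] unfolding diff_ops_RA_def by blast
      hence mS: "m \<in> ?S" using u(2) unfolding SR_iff by blast
      from T0_closed[OF A _ gg(1) gg(2) gg(3) P u(2)] mS show ?thesis unfolding T0_def by auto
    qed
    thus "op_act P f \<in> M" using oR unfolding M_def by blast
  next
    fix f m assume f: "f \<in> M"
    have "{x. (if x = m then f m else 0) \<noteq> 0} \<subseteq> {m}" by auto
    hence "finite {x. (if x = m then f m else 0) \<noteq> 0}" using finite_subset by blast
    thus "(\<lambda>x. if x = m then f m else 0) \<in> M" using f unfolding M_def SR_iff by auto
  qed
  from gs sub have "M = {\<lambda>_. 0} \<or> M = semigroup_ring A" unfolding graded_simple_def by blast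
  moreover have "Dlt q0 \<in> M" using Dlt_RA[OF q0S] q0T unfolding M_def by (auto simp: Dlt_def)
  moreover have "Dlt q0 \<noteq> (\<lambda>_. 0)" unfolding Dlt_def by (metis one_neq_zero)
  moreover have "Dlt (\<lambda>_. 0) \<in> semigroup_ring A" using Dlt_RA[OF ns_zero] .
  moreover have "Dlt (\<lambda>_. 0) \<notin> M" using zT unfolding M_def Dlt_def by auto
  ultimately show False by auto
qed



definition qdot :: "('n::finite \<Rightarrow> rat) \<Rightarrow> ('n \<Rightarrow> rat) \<Rightarrow> rat" where
  "qdot w v = (\<Sum>i\<in>UNIV. w i * v i)"

lemma qdot_diff_left: "qdot (\<lambda>i. a i - c * b i) v = qdot a v - c * qdot b v"
  unfolding qdot_def by (simp add: algebra_simps sum_subtractf sum_distrib_left)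

lemma qdot_diff_right: "qdot w (\<lambda>i. a i - c * b i) = qdot w a - c * qdot w b"
  unfolding qdot_def by (simp add: algebra_simps sum_subtractf sum_distrib_left)

lemma qdot_lin: "qdot w (\<lambda>i. \<Sum>j\<in>J. \<mu> j * g j i) = (\<Sum>j\<in>J. \<mu> j * qdot w (g j))"
  unfolding qdot_def by (rule sum_swap_lin)

lemma qdot_self_pos: "v \<noteq> (\<lambda>i. 0) \<Longrightarrow> qdot v v > 0"
proof -
  assume "v \<noteq> (\<lambda>i. 0)"
  then obtain i0 where i0: "v i0 \<noteq> 0" by auto
  have "v i0 * v i0 \<le> (\<Sum>i\<in>UNIV. v i * v i)"
    by (rule member_le_sum) auto
  moreover have "v i0 * v i0 > 0" using i0 by (cases "v i0 > 0") (auto simp: zero_less_mult_iff)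
  ultimately show ?thesis unfolding qdot_def by linarith
qed

lemma farkas:
  fixes g :: "'j \<Rightarrow> ('n::finite \<Rightarrow> rat)"
  assumes "finite J" "\<not> (\<exists>\<mu>. (\<forall>j\<in>J. \<mu> j \<ge> 0) \<and> y = (\<lambda>i. \<Sum>j\<in>J. \<mu> j * g j i))"
  shows "\<exists>w. (\<forall>j\<in>J. qdot w (g j) \<ge> 0) \<and> qdot w y < 0"
  using assms
proof (induct J arbitrary: g y rule: finite_induct)
  case empty
  hence "y \<noteq> (\<lambda>i. 0)" by auto
  hence "qdot y y > 0" by (rule qdot_self_pos)
  hence "qdot (\<lambda>i. 0 - 1 * y i) y < 0" using qdot_diff_left[of "\<lambda>i. 0" 1 y y] by (simp add: qdot_def)
  thus ?case by blast
next
  case (insert j0 J)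
  have nc: "\<not> (\<exists>\<mu>. (\<forall>j\<in>J. \<mu> j \<ge> 0) \<and> y = (\<lambda>i. \<Sum>j\<in>J. \<mu> j * g j i))"
  proof
    assume "\<exists>\<mu>. (\<forall>j\<in>J. \<mu> j \<ge> 0) \<and> y = (\<lambda>i. \<Sum>j\<in>J. \<mu> j * g j i)"
    then obtain \<mu> where \<mu>: "\<forall>j\<in>J. \<mu> j \<ge> 0" "y = (\<lambda>i. \<Sum>j\<in>J. \<mu> j * g j i)" by blast
    let ?\<mu> = "\<mu>(j0 := 0)"
    have "\<forall>j\<in>insert j0 J. ?\<mu> j \<ge> 0" using \<mu> by auto
    moreover have "y = (\<lambda>i. \<Sum>j\<in>insert j0 J. ?\<mu> j * g j i)"
    proof
      fix i
      have "(\<Sum>j\<in>J. ?\<mu> j * g j i) = (\<Sum>j\<in>J. \<mu> j * g j i)"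
        using insert(2) by (intro sum.cong) auto
      thus "y i = (\<Sum>j\<in>insert j0 J. ?\<mu> j * g j i)" using insert(1,2) \<mu>(2) by simp
    qed
    ultimately show False using insert(4) by blast
  qed
  obtain w where w: "\<forall>j\<in>J. qdot w (g j) \<ge> 0" "qdot w y < 0" using insert(3)[OF nc] by blast
  show ?case
  proof (cases "qdot w (g j0) \<ge> 0")
    case True thus ?thesis using w by (intro exI[of _ w]) auto
  next
    case False
    define \<alpha> where "\<alpha> = qdot w (g j0)"
    have \<alpha>: "\<alpha> < 0" using False \<alpha>_def by simp
    define h where "h j = (\<lambda>i. g j i - (qdot w (g j) / \<alpha>) * g j0 i)" for j
    define y' where "y' = (\<lambda>i. y i - (qdot w y / \<alpha>) * g j0 i)"
    have nc': "\<not> (\<exists>\<mu>. (\<forall>j\<in>J. \<mu> j \<ge> 0) \<and> y' = (\<lambda>i. \<Sum>j\<in>J. \<mu> j * h j i))"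
    proof
      assume "\<exists>\<mu>. (\<forall>j\<in>J. \<mu> j \<ge> 0) \<and> y' = (\<lambda>i. \<Sum>j\<in>J. \<mu> j * h j i)"
      then obtain \<mu> where \<mu>: "\<forall>j\<in>J. \<mu> j \<ge> 0" "y' = (\<lambda>i. \<Sum>j\<in>J. \<mu> j * h j i)" by blast
      define \<beta> where "\<beta> = (qdot w y - (\<Sum>j\<in>J. \<mu> j * qdot w (g j))) / \<alpha>"
      have "(\<Sum>j\<in>J. \<mu> j * qdot w (g j)) \<ge> 0" using \<mu>(1) w(1) by (intro sum_nonneg) auto
      hence "qdot w y - (\<Sum>j\<in>J. \<mu> j * qdot w (g j)) < 0" using w(2) by linarith
      hence \<beta>: "\<beta> \<ge> 0" unfolding \<beta>_def using \<alpha> by (simp add: divide_nonpos_neg)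
      let ?\<mu> = "\<mu>(j0 := \<beta>)"
      have "\<forall>j\<in>insert j0 J. ?\<mu> j \<ge> 0" using \<mu> \<beta> by auto
      moreover have "y = (\<lambda>i. \<Sum>j\<in>insert j0 J. ?\<mu> j * g j i)"
      proof
        fix i
        have s: "(\<Sum>j\<in>J. ?\<mu> j * g j i) = (\<Sum>j\<in>J. \<mu> j * g j i)"
          using insert(2) by (intro sum.cong) auto
        have "y i = y' i + (qdot w y / \<alpha>) * g j0 i" unfolding y'_def by simp
        also have "\<dots> = (\<Sum>j\<in>J. \<mu> j * h j i) + (qdot w y / \<alpha>) * g j0 i" using \<mu>(2) by simp
        also have "\<dots> = (\<Sum>j\<in>J. \<mu> j * g j i) - (\<Sum>j\<in>J. \<mu> j * qdot w (g j)) / \<alpha> * g j0 i + (qdot w y / \<alpha>) * g j0 i"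
          unfolding h_def by (simp add: algebra_simps sum_subtractf sum_distrib_left sum_divide_distrib sum_distrib_right)
        also have "\<dots> = (\<Sum>j\<in>J. \<mu> j * g j i) + \<beta> * g j0 i"
          unfolding \<beta>_def using \<alpha> by (simp add: field_simps)
        also have "\<dots> = (\<Sum>j\<in>insert j0 J. ?\<mu> j * g j i)" using insert(1,2) s by simp
        finally show "y i = (\<Sum>j\<in>insert j0 J. ?\<mu> j * g j i)" .
      qed
      ultimately show False using insert(4) by blast
    qed
    obtain w' where w': "\<forall>j\<in>J. qdot w' (h j) \<ge> 0" "qdot w' y' < 0" using insert(3)[OF nc'] by blast
    define w'' where "w'' = (\<lambda>i. w' i - (qdot w' (g j0) / \<alpha>) * w i)"
    have e: "qdot w'' v = qdot w' v - (qdot w' (g j0) / \<alpha>) * qdot w v" for v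
      unfolding w''_def by (rule qdot_diff_left)
    have "qdot w'' (g j0) = 0" unfolding e using \<alpha> \<alpha>_def by simp
    moreover have "qdot w'' (g j) = qdot w' (h j)" for j
      unfolding e h_def qdot_diff_right by (simp add: field_simps)
    moreover have "qdot w'' y = qdot w' y'"
      unfolding e y'_def qdot_diff_right by (simp add: field_simps)
    ultimately show ?thesis using w' by (intro exI[of _ w'']) auto
  qed
qed



definition qv :: "('n \<Rightarrow> int) \<Rightarrow> ('n \<Rightarrow> rat)" where
  "qv a = (\<lambda>i. rat_of_int (a i))"

definition qface :: "('n::finite \<Rightarrow> int) set \<Rightarrow> ('n \<Rightarrow> int) set \<Rightarrow> bool" where
  "qface A F \<longleftrightarrow> (\<exists>W. (\<forall>a\<in>A. qdot W (qv a) \<ge> 0) \<and> F = {a\<in>A. qdot W (qv a) = 0})"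

lemma qdot_neg: "qdot w (\<lambda>i. - v i) = - qdot w v"
  unfolding qdot_def by (simp add: sum_negf)

lemma qface_sub: "qface A F \<Longrightarrow> F \<subseteq> A"
  unfolding qface_def by auto

lemma qface_A: "qface A A"
  unfolding qface_def by (rule exI[of _ "\<lambda>_. 0"]) (simp add: qdot_def)

lemma qface_refine:
  assumes A: "finite A" and F: "qface A F" and W': "\<forall>a\<in>F. qdot W' (qv a) \<ge> 0"
  shows "qface A {a\<in>F. qdot W' (qv a) = 0}"
proof -
  obtain WF where WF: "\<forall>a\<in>A. qdot WF (qv a) \<ge> 0" "F = {a\<in>A. qdot WF (qv a) = 0}"
    using F unfolding qface_def by blast
  have pos: "qdot WF (qv a) > 0" if "a \<in> A - F" for a
  proof -
    have "qdot WF (qv a) \<ge> 0" "qdot WF (qv a) \<noteq> 0" using that WF by auto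
    thus ?thesis by simp
  qed
  define M where "M = 1 + (\<Sum>a\<in>A - F. \<bar>qdot W' (qv a)\<bar> / qdot WF (qv a))"
  define W where "W = (\<lambda>i. W' i - (- M) * WF i)"
  have We: "qdot W v = qdot W' v + M * qdot WF v" for v
    unfolding W_def qdot_diff_left by simp
  have Wpos: "qdot W (qv a) > 0" if a: "a \<in> A - F" for a
  proof -
    have t: "\<bar>qdot W' (qv a)\<bar> / qdot WF (qv a) \<le> (\<Sum>a\<in>A - F. \<bar>qdot W' (qv a)\<bar> / qdot WF (qv a))"
      using A a pos by (intro member_le_sum) (auto intro!: divide_nonneg_pos)
    have p: "qdot WF (qv a) > 0" using pos a by blast
    have i1: "M * qdot WF (qv a) \<ge> (1 + \<bar>qdot W' (qv a)\<bar> / qdot WF (qv a)) * qdot WF (qv a)"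
      unfolding M_def using t p by (intro mult_right_mono) auto
    have i2: "(1 + \<bar>qdot W' (qv a)\<bar> / qdot WF (qv a)) * qdot WF (qv a) = qdot WF (qv a) + \<bar>qdot W' (qv a)\<bar>"
      using p by (simp add: field_simps)
    from i1 i2 have "M * qdot WF (qv a) \<ge> qdot WF (qv a) + \<bar>qdot W' (qv a)\<bar>" by simp
    thus ?thesis unfolding We using p by linarith
  qed
  have "\<forall>a\<in>A. qdot W (qv a) \<ge> 0"
  proof
    fix a assume "a \<in> A"
    show "qdot W (qv a) \<ge> 0"
    proof (cases "a \<in> F")
      case True thus ?thesis using W' WF(2) We by auto
    next
      case False thus ?thesis using Wpos[of a] \<open>a \<in> A\<close> by simp
    qed
  qed
  moreover have "{a\<in>F. qdot W' (qv a) = 0} = {a\<in>A. qdot W (qv a) = 0}"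
  proof (intro set_eqI iffI)
    fix a assume "a \<in> {a\<in>F. qdot W' (qv a) = 0}"
    thus "a \<in> {a\<in>A. qdot W (qv a) = 0}" using WF(2) We by auto
  next
    fix a assume a: "a \<in> {a\<in>A. qdot W (qv a) = 0}"
    hence "a \<in> F" using Wpos[of a] by (cases "a \<in> F") auto
    thus "a \<in> {a\<in>F. qdot W' (qv a) = 0}" using a WF(2) We by auto
  qed
  ultimately show ?thesis unfolding qface_def by blast
qed

definition minface :: "('n::finite \<Rightarrow> int) set \<Rightarrow> ('n \<Rightarrow> int) set \<Rightarrow> ('n \<Rightarrow> int) set \<Rightarrow> bool" where
  "minface A B F \<longleftrightarrow> qface A F \<and> B \<subseteq> F \<and> (\<forall>F'. qface A F' \<and> B \<subseteq> F' \<longrightarrow> card F \<le> card F')"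

lemma minface_ex: "B \<subseteq> A \<Longrightarrow> \<exists>F. minface A B F"
  unfolding minface_def using ex_has_least_nat[of "\<lambda>F. qface A F \<and> B \<subseteq> F" A card] qface_A by blast

lemma claimG:
  assumes A: "finite A" and mf: "minface A B F" and b: "b \<in> F"
  shows "\<exists>t \<mu>. t \<ge> 0 \<and> (\<forall>a\<in>F. \<mu> a \<ge> 0) \<and>
     (\<lambda>i. t * (\<Sum>a\<in>B. qv a i) - qv b i) = (\<lambda>i. \<Sum>a\<in>F. \<mu> a * qv a i)"
proof (rule ccontr)
  assume H: "\<not> ?thesis"
  have F: "qface A F" "B \<subseteq> F" and mn: "\<forall>F'. qface A F' \<and> B \<subseteq> F' \<longrightarrow> card F \<le> card F'"
    using mf unfolding minface_def by auto
  have FA: "F \<subseteq> A" using qface_sub[OF F(1)] .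
  have Ff: "finite F" using A FA finite_subset by blast
  define e where "e = (\<lambda>i. \<Sum>a\<in>B. qv a i)"
  define J where "J = insert None (Some ` F)"
  define g where "g j = (case j of None \<Rightarrow> (\<lambda>i. - e i) | Some a \<Rightarrow> qv a)" for j
  have sumJ: "(\<Sum>j\<in>J. \<mu> j * g j i) = \<mu> None * (- e i) + (\<Sum>a\<in>F. \<mu> (Some a) * qv a i)" for \<mu> i
  proof -
    have "(\<Sum>j\<in>J. \<mu> j * g j i) = \<mu> None * g None i + (\<Sum>j\<in>Some ` F. \<mu> j * g j i)"
      unfolding J_def using Ff by (subst sum.insert) auto
    also have "(\<Sum>j\<in>Some ` F. \<mu> j * g j i) = (\<Sum>a\<in>F. \<mu> (Some a) * qv a i)"
      by (subst sum.reindex) (auto simp: g_def)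
    finally show ?thesis by (simp add: g_def)
  qed
  have "\<not> (\<exists>\<mu>. (\<forall>j\<in>J. \<mu> j \<ge> 0) \<and> (\<lambda>i. - qv b i) = (\<lambda>i. \<Sum>j\<in>J. \<mu> j * g j i))"
  proof
    assume "\<exists>\<mu>. (\<forall>j\<in>J. \<mu> j \<ge> 0) \<and> (\<lambda>i. - qv b i) = (\<lambda>i. \<Sum>j\<in>J. \<mu> j * g j i)"
    then obtain \<mu> where \<mu>: "\<forall>j\<in>J. \<mu> j \<ge> 0" "(\<lambda>i. - qv b i) = (\<lambda>i. \<Sum>j\<in>J. \<mu> j * g j i)" by blast
    have "\<mu> None \<ge> 0" "\<forall>a\<in>F. \<mu> (Some a) \<ge> 0" using \<mu>(1) unfolding J_def by auto
    moreover have "(\<lambda>i. \<mu> None * e i - qv b i) = (\<lambda>i. \<Sum>a\<in>F. \<mu> (Some a) * qv a i)"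
    proof
      fix i
      have "- qv b i = \<mu> None * (- e i) + (\<Sum>a\<in>F. \<mu> (Some a) * qv a i)"
        using fun_cong[OF \<mu>(2), of i] sumJ by simp
      thus "\<mu> None * e i - qv b i = (\<Sum>a\<in>F. \<mu> (Some a) * qv a i)" by simp
    qed
    ultimately have "\<exists>t \<mu>. t \<ge> 0 \<and> (\<forall>a\<in>F. \<mu> a \<ge> 0) \<and>
     (\<lambda>i. t * (\<Sum>a\<in>B. qv a i) - qv b i) = (\<lambda>i. \<Sum>a\<in>F. \<mu> a * qv a i)"
      unfolding e_def by (intro exI[of _ "\<mu> None"] exI[of _ "\<lambda>a. \<mu> (Some a)"] conjI)
    thus False by (rule notE[OF H])
  qed
  moreover have finJ: "finite J" unfolding J_def using Ff by simp
  ultimately have "\<exists>w. (\<forall>j\<in>J. qdot w (g j) \<ge> 0) \<and> qdot w (\<lambda>i. - qv b i) < 0"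
    using farkas[of J _ g] by blast
  then obtain W where W: "\<forall>j\<in>J. qdot W (g j) \<ge> 0" "qdot W (\<lambda>i. - qv b i) < 0"
    by (elim exE conjE)
  have WF: "\<forall>a\<in>F. qdot W (qv a) \<ge> 0" using W(1) unfolding J_def g_def by auto
  have "qdot W (\<lambda>i. - e i) \<ge> 0" using W(1) unfolding J_def g_def by auto
  hence We: "qdot W e \<le> 0" unfolding qdot_neg by simp
  have "qdot W e = (\<Sum>a\<in>B. 1 * qdot W (qv a))"
    unfolding e_def using qdot_lin[of W "\<lambda>_. 1" "\<lambda>a. qv a" B] by simp
  hence "(\<Sum>a\<in>B. qdot W (qv a)) = 0" using We WF F(2) sum_nonneg[of B "\<lambda>a. qdot W (qv a)"] by auto
  moreover have "finite B" using Ff F(2) finite_subset by blast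
  moreover have "\<forall>a\<in>B. qdot W (qv a) \<ge> 0" using WF F(2) by auto
  ultimately have B0: "\<forall>a\<in>B. qdot W (qv a) = 0"
    using sum_nonneg_eq_0_iff[of B "\<lambda>a. qdot W (qv a)"] by blast
  have bpos: "qdot W (qv b) > 0" using W(2) unfolding qdot_neg by simp
  let ?F' = "{a\<in>F. qdot W (qv a) = 0}"
  have "qface A ?F'" using qface_refine[OF A F(1) WF] .
  moreover have "B \<subseteq> ?F'" using B0 F(2) by auto
  ultimately have "card F \<le> card ?F'" using mn by blast
  moreover have "b \<notin> ?F'" using bpos by simp
  hence "?F' \<subset> F" using b by blast
  hence "card ?F' < card F" using Ff by (intro psubset_card_mono)
  ultimately show False by simp
qed

lemma claimG_int:
  assumes A: "finite A" and mf: "minface A B F" and b: "b \<in> F"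
  shows "\<exists>N::nat. (\<lambda>i. int N * (\<Sum>a\<in>B. a i) - b i) \<in> nat_span F"
proof -
  obtain t \<mu> where t: "t \<ge> 0" "\<forall>a\<in>F. \<mu> a \<ge> 0"
    "(\<lambda>i. t * (\<Sum>a\<in>B. qv a i) - qv b i) = (\<lambda>i. \<Sum>a\<in>F. \<mu> a * qv a i)"
    using claimG[OF assms] by blast
  have FA: "F \<subseteq> A" using mf qface_sub unfolding minface_def by blast
  have Ff: "finite F" using A FA finite_subset by blast
  obtain D where D: "D > 0" "\<forall>x\<in>insert t (\<mu> ` F). \<exists>k::int. of_nat D * x = of_int k"
    using common_denom[of "insert t (\<mu> ` F)"] Ff by auto
  obtain kt where kt: "of_nat D * t = of_int kt" using D(2) by auto
  define k where "k a = (SOME k::int. of_nat D * \<mu> a = of_int k)" for a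
  have k: "of_nat D * \<mu> a = of_int (k a)" if "a \<in> F" for a
  proof -
    have "\<exists>k::int. of_nat D * \<mu> a = of_int k" using D(2) that by auto
    thus ?thesis unfolding k_def by (rule someI_ex)
  qed
  have "of_nat D * t \<ge> 0" using t(1) by simp
  hence "rat_of_int kt \<ge> 0" using kt by simp
  hence ktpos: "kt \<ge> 0" by simp
  have kpos: "k a \<ge> 0" if "a \<in> F" for a
  proof -
    have "of_nat D * \<mu> a \<ge> 0" using t(2) that by simp
    hence "rat_of_int (k a) \<ge> 0" using k[OF that] by simp
    thus ?thesis by simp
  qed
  have eq: "kt * (\<Sum>a\<in>B. a i) - int D * b i = (\<Sum>a\<in>F. k a * a i)" for i
  proof -
    have "rat_of_int (kt * (\<Sum>a\<in>B. a i) - int D * b i) = of_nat D * (t * (\<Sum>a\<in>B. qv a i) - qv b i)"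
      using kt unfolding qv_def by (simp add: algebra_simps)
    also have "\<dots> = of_nat D * (\<Sum>a\<in>F. \<mu> a * qv a i)" using fun_cong[OF t(3), of i] by simp
    also have "\<dots> = (\<Sum>a\<in>F. (of_nat D * \<mu> a) * qv a i)" by (simp add: sum_distrib_left mult.assoc)
    also have "\<dots> = rat_of_int (\<Sum>a\<in>F. k a * a i)" by (simp add: k qv_def)
    finally show ?thesis by (simp only: of_int_eq_iff)
  qed
  have s1: "(\<lambda>i. \<Sum>a\<in>F. int (nat (k a)) * a i) \<in> nat_span F"
    unfolding nat_span_def by (intro CollectI exI[of _ "\<lambda>a. nat (k a)"]) simp
  have s2: "(\<lambda>i. int (D - 1) * b i) \<in> nat_span F" using ns_smult[OF ns_mem[OF Ff b]] .
  have "(\<lambda>i. int (nat kt) * (\<Sum>a\<in>B. a i) - b i) = (\<lambda>i. int (D - 1) * b i + (\<Sum>a\<in>F. int (nat (k a)) * a i))"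
  proof
    fix i
    have "(\<Sum>a\<in>F. int (nat (k a)) * a i) = (\<Sum>a\<in>F. k a * a i)" using kpos by (intro sum.cong) auto
    thus "int (nat kt) * (\<Sum>a\<in>B. a i) - b i = int (D - 1) * b i + (\<Sum>a\<in>F. int (nat (k a)) * a i)"
      using eq[of i] ktpos D(1) by (simp add: of_nat_diff algebra_simps)
  qed
  thus ?thesis using ns_add[OF s2 s1] by (intro exI[of _ "nat kt"]) simp
qed



definition qsp :: "('n::finite \<Rightarrow> int) set \<Rightarrow> ('n \<Rightarrow> int) \<Rightarrow> bool" where
  "qsp F v \<longleftrightarrow> (\<exists>\<mu>. qv v = (\<lambda>i. \<Sum>a\<in>F. \<mu> a * qv a i))"

lemma qsp_neg: "qsp F v \<Longrightarrow> qsp F (\<lambda>i. - v i)"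
  unfolding qsp_def
proof (elim exE)
  fix \<mu> assume "qv v = (\<lambda>i. \<Sum>a\<in>F. \<mu> a * qv a i)"
  hence "qv (\<lambda>i. - v i) = (\<lambda>i. \<Sum>a\<in>F. (- \<mu> a) * qv a i)"
    unfolding qv_def by (simp add: fun_eq_iff sum_negf)
  thus "\<exists>\<mu>. qv (\<lambda>i. - v i) = (\<lambda>i. \<Sum>a\<in>F. \<mu> a * qv a i)" by (rule exI[of _ "\<lambda>a. - \<mu> a"])
qed

lemma farkas_span:
  fixes F :: "('n::finite \<Rightarrow> int) set"
  assumes F: "finite F" and nq: "\<not> qsp F v"
  shows "\<exists>W. (\<forall>a\<in>F. qdot W (qv a) = 0) \<and> qdot W (qv v) \<noteq> 0"
proof -
  define J where "J = F \<times> (UNIV :: bool set)"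
  define g :: "('n \<Rightarrow> int) \<times> bool \<Rightarrow> ('n \<Rightarrow> rat)" where "g j = (if snd j then qv (fst j) else (\<lambda>i. - qv (fst j) i))" for j
  have sumJ: "(\<Sum>j\<in>J. \<mu> j * g j i) = (\<Sum>a\<in>F. (\<mu> (a, True) - \<mu> (a, False)) * qv a i)" for \<mu> i
  proof -
    have "(\<Sum>j\<in>J. \<mu> j * g j i) = (\<Sum>a\<in>F. \<Sum>s\<in>UNIV. \<mu> (a, s) * g (a, s) i)"
      unfolding J_def by (simp add: sum.cartesian_product)
    also have "\<dots> = (\<Sum>a\<in>F. (\<mu> (a, True) - \<mu> (a, False)) * qv a i)"
      by (rule sum.cong) (auto simp: UNIV_bool g_def algebra_simps)
    finally show ?thesis .
  qed
  have finJ: "finite J" unfolding J_def using F by simp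
  have "\<not> (\<exists>\<mu>. (\<forall>j\<in>J. \<mu> j \<ge> 0) \<and> qv v = (\<lambda>i. \<Sum>j\<in>J. \<mu> j * g j i))"
  proof
    assume "\<exists>\<mu>. (\<forall>j\<in>J. \<mu> j \<ge> 0) \<and> qv v = (\<lambda>i. \<Sum>j\<in>J. \<mu> j * g j i)"
    then obtain \<mu> where "qv v = (\<lambda>i. \<Sum>j\<in>J. \<mu> j * g j i)" by blast
    hence "qv v = (\<lambda>i. \<Sum>a\<in>F. (\<mu> (a, True) - \<mu> (a, False)) * qv a i)" using sumJ by simp
    hence "qsp F v" unfolding qsp_def by (rule exI[of _ "\<lambda>a. \<mu> (a, True) - \<mu> (a, False)"])
    with nq show False by simp
  qed
  hence "\<exists>w. (\<forall>j\<in>J. qdot w (g j) \<ge> 0) \<and> qdot w (qv v) < 0" using farkas[OF finJ] by blast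
  then obtain W where W: "\<forall>j\<in>J. qdot W (g j) \<ge> 0" "qdot W (qv v) < 0" by (elim exE conjE)
  have "qdot W (qv a) = 0" if a: "a \<in> F" for a
  proof -
    have "qdot W (g (a, True)) \<ge> 0" "qdot W (g (a, False)) \<ge> 0" using W(1) a unfolding J_def by auto
    thus ?thesis unfolding g_def by (simp add: qdot_neg)
  qed
  thus ?thesis using W(2) by (intro exI[of _ W]) auto
qed

lemma uniform_bound:
  assumes "finite X" "\<forall>x\<in>X. \<exists>T::nat. \<forall>T'\<ge>T. P x T'"
  shows "\<exists>T. \<forall>x\<in>X. \<forall>T'\<ge>T. P x T'"
  using assms
proof (induct X rule: finite_induct)
  case empty show ?case by simp
next
  case (insert x X)
  then obtain T1 where T1: "\<forall>y\<in>X. \<forall>T'\<ge>T1. P y T'" by auto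
  obtain T2 where T2: "\<forall>T'\<ge>T2. P x T'" using insert(4) by auto
  show ?case using T1 T2 by (intro exI[of _ "max T1 T2"]) auto
qed

lemma pigeon:
  fixes K :: "nat \<Rightarrow> nat" and n :: "'a \<Rightarrow> nat"
  assumes A: "finite A" and mono: "\<And>i. K i \<le> K (Suc i)"
  shows "\<exists>i\<le>card A. \<forall>a\<in>A. \<not> (K i \<le> n a \<and> n a < K (Suc i))"
proof (rule ccontr)
  assume H: "\<not> ?thesis"
  define f where "f a = (LEAST i. n a < K (Suc i))" for a
  have "{..card A} \<subseteq> f ` A"
  proof
    fix i assume "i \<in> {..card A}"
    then obtain a where a: "a \<in> A" "K i \<le> n a" "n a < K (Suc i)" using H by auto
    have "f a = i" unfolding f_def
    proof (rule Least_equality)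
      show "n a < K (Suc i)" by (rule a(3))
    next
      fix j assume j: "n a < K (Suc j)"
      show "i \<le> j"
      proof (rule ccontr)
        assume "\<not> i \<le> j"
        hence "Suc j \<le> i" by simp
        hence "K (Suc j) \<le> K i" using lift_Suc_mono_le[of K, OF mono] by blast
        with a(2) j show False by simp
      qed
    qed
    thus "i \<in> f ` A" using a(1) by blast
  qed
  hence "card {..card A} \<le> card (f ` A)" using A by (intro card_mono) auto
  also have "\<dots> \<le> card A" using A by (rule card_image_le)
  finally show False by simp
qed

lemma lemmaL:
  assumes A: "finite A" and mf: "minface A B F" and hyp: "rat_span_lattice F = int_span F"
    and y: "qsp F y"
  shows "\<exists>T. \<forall>n::('n::finite\<Rightarrow>int)\<Rightarrow>nat. (\<forall>a\<in>B. n a \<ge> T) \<longrightarrow>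
      (\<lambda>i. (\<Sum>a\<in>B. int (n a) * a i) + y i) \<in> nat_span F"
proof -
  have FA: "F \<subseteq> A" and BF: "B \<subseteq> F" using mf qface_sub unfolding minface_def by auto
  have Ff: "finite F" using A FA finite_subset by blast
  have Bf: "finite B" using Ff BF finite_subset by blast
  have "y \<in> rat_span_lattice F" using y unfolding qsp_def rat_span_lattice_def qv_def by auto
  hence "y \<in> int_span F" using hyp by simp
  then obtain z where z: "y = (\<lambda>i. \<Sum>a\<in>F. z a * a i)" unfolding int_span_def by blast
  define E where "E = (\<lambda>i. \<Sum>a\<in>B. a i)"
  have "\<forall>b\<in>F. \<exists>N::nat. (\<lambda>i. int N * E i - b i) \<in> nat_span F"
    unfolding E_def using claimG_int[OF A mf] by blast
  then obtain Nf where Nf: "\<forall>b\<in>F. (\<lambda>i. int (Nf b) * E i - b i) \<in> nat_span F" by metis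
  have Ens: "E \<in> nat_span F"
  proof -
    have "(\<lambda>i. \<Sum>a\<in>B. a i) \<in> nat_span F" using Bf BF by (intro ns_sum ballI ns_mem[OF Ff]) auto
    thus ?thesis unfolding E_def .
  qed
  define T where "T = (\<Sum>b\<in>F. nat \<bar>z b\<bar> * Nf b)"
  define X where "X b = (\<lambda>i. int (nat \<bar>z b\<bar> * Nf b) * E i + z b * b i)" for b
  have Xns: "X b \<in> nat_span F" if b: "b \<in> F" for b
  proof (cases "z b \<ge> 0")
    case True
    have eq: "X b = (\<lambda>i. int (nat \<bar>z b\<bar> * Nf b) * E i + int (nat (z b)) * b i)"
      unfolding X_def using True by simp
    show ?thesis unfolding eq by (rule ns_add[OF ns_smult[OF Ens] ns_smult[OF ns_mem[OF Ff b]]])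
  next
    case False
    have eq: "X b = (\<lambda>i. int (nat \<bar>z b\<bar>) * (int (Nf b) * E i - b i))"
      unfolding X_def using False by (simp add: algebra_simps)
    show ?thesis unfolding eq by (rule ns_smult[OF Nf[rule_format, OF b]])
  qed
  have "\<forall>n::('n\<Rightarrow>int)\<Rightarrow>nat. (\<forall>a\<in>B. n a \<ge> T) \<longrightarrow>
      (\<lambda>i. (\<Sum>a\<in>B. int (n a) * a i) + y i) \<in> nat_span F"
  proof (intro allI impI)
    fix n :: "('n\<Rightarrow>int)\<Rightarrow>nat" assume n: "\<forall>a\<in>B. n a \<ge> T"
    have p1: "(\<lambda>i. \<Sum>a\<in>B. int (n a - T) * a i) \<in> nat_span F"
      using Bf BF by (intro ns_sum ballI ns_smult ns_mem[OF Ff]) auto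
    have p2: "(\<lambda>i. \<Sum>b\<in>F. X b i) \<in> nat_span F" using Ff Xns by (intro ns_sum) auto
    have "(\<lambda>i. (\<Sum>a\<in>B. int (n a) * a i) + y i) = (\<lambda>i. (\<Sum>a\<in>B. int (n a - T) * a i) + (\<Sum>b\<in>F. X b i))"
    proof
      fix i
      have "(\<Sum>b\<in>F. X b i) = int T * E i + (\<Sum>b\<in>F. z b * b i)"
        unfolding X_def T_def by (simp add: sum.distrib sum_distrib_right)
      moreover have "(\<Sum>a\<in>B. int (n a) * a i) = (\<Sum>a\<in>B. int (n a - T) * a i) + int T * E i"
      proof -
        have "(\<Sum>a\<in>B. int (n a) * a i) = (\<Sum>a\<in>B. int (n a - T) * a i + int T * a i)"
          using n by (intro sum.cong) (auto simp: of_nat_diff algebra_simps)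
        thus ?thesis unfolding E_def by (simp add: sum.distrib sum_distrib_left)
      qed
      ultimately show "(\<Sum>a\<in>B. int (n a) * a i) + y i = (\<Sum>a\<in>B. int (n a - T) * a i) + (\<Sum>b\<in>F. X b i)"
        unfolding z by simp
    qed
    thus "(\<lambda>i. (\<Sum>a\<in>B. int (n a) * a i) + y i) \<in> nat_span F" using ns_add[OF p1 p2] by simp
  qed
  thus ?thesis by blast
qed



definition Qs :: "('n::finite \<Rightarrow> int) set \<Rightarrow> nat \<Rightarrow> ('n \<Rightarrow> int) set \<Rightarrow> ('n \<Rightarrow> int) set" where
  "Qs A K B = (\<lambda>n. \<lambda>i. \<Sum>a\<in>A-B. int (n a) * a i) ` (PiE (A - B) (\<lambda>_. {..<K}))"

definition FB :: "('n::finite \<Rightarrow> int) set \<Rightarrow> ('n \<Rightarrow> int) set \<Rightarrow> ('n \<Rightarrow> int) set" where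
  "FB A B = (SOME F. minface A B F)"

definition Good :: "('n::finite \<Rightarrow> int) set \<Rightarrow> ('n \<Rightarrow> int) \<Rightarrow> nat \<Rightarrow> nat \<Rightarrow> bool" where
  "Good A m K K' \<longleftrightarrow> (\<forall>B\<in>Pow A. \<forall>q\<in>Qs A K B. qsp (FB A B) (\<lambda>i. q i - m i) \<longrightarrow>
     (\<forall>n. (\<forall>a\<in>B. n a \<ge> K') \<longrightarrow> (\<lambda>i. (\<Sum>a\<in>B. int (n a) * a i) + (q i - m i)) \<in> nat_span A))"

definition nextK :: "('n::finite \<Rightarrow> int) set \<Rightarrow> ('n \<Rightarrow> int) \<Rightarrow> nat \<Rightarrow> nat" where
  "nextK A m K = (SOME K'. K \<le> K' \<and> Good A m K K')"

definition Ks :: "('n::finite \<Rightarrow> int) set \<Rightarrow> ('n \<Rightarrow> int) \<Rightarrow> nat \<Rightarrow> nat" where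
  "Ks A m i = (nextK A m ^^ i) 0"

lemma Qs_finite: "finite A \<Longrightarrow> finite (Qs A K B)"
  unfolding Qs_def by (intro finite_imageI finite_PiE) auto

lemma Qs_mem:
  assumes "\<forall>a\<in>A-B. n a < K"
  shows "(\<lambda>i. \<Sum>a\<in>A-B. int (n a) * a i) \<in> Qs A K B"
proof -
  have "restrict n (A - B) \<in> PiE (A - B) (\<lambda>_. {..<K})" using assms by auto
  moreover have "(\<lambda>i. \<Sum>a\<in>A-B. int (n a) * a i) = (\<lambda>i. \<Sum>a\<in>A-B. int (restrict n (A - B) a) * a i)"
    by (intro ext sum.cong) auto
  ultimately show ?thesis unfolding Qs_def by blast
qed

lemma FB_minface: "B \<subseteq> A \<Longrightarrow> minface A B (FB A B)"
  unfolding FB_def using minface_ex by (metis someI_ex)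

lemma good_ex:
  assumes A: "finite A" and hyp: "\<forall>F. qface A F \<longrightarrow> rat_span_lattice F = int_span F"
  shows "\<exists>K'. K \<le> K' \<and> Good A m K K'"
proof -
  define P where "P x T' \<longleftrightarrow> (qsp (FB A (fst x)) (\<lambda>i. snd x i - m i) \<longrightarrow>
     (\<forall>n. (\<forall>a\<in>fst x. n a \<ge> T') \<longrightarrow> (\<lambda>i. (\<Sum>a\<in>fst x. int (n a) * a i) + (snd x i - m i)) \<in> nat_span A))"
    for x :: "('a \<Rightarrow> int) set \<times> ('a \<Rightarrow> int)" and T'
  have fin: "finite (Sigma (Pow A) (Qs A K))" using A Qs_finite by (intro finite_SigmaI) auto
  have "\<forall>x\<in>Sigma (Pow A) (Qs A K). \<exists>T::nat. \<forall>T'\<ge>T. P x T'"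
  proof
    fix x assume x: "x \<in> Sigma (Pow A) (Qs A K)"
    obtain B q where Bq: "x = (B, q)" by (cases x)
    have BA: "B \<subseteq> A" using x Bq by auto
    show "\<exists>T::nat. \<forall>T'\<ge>T. P x T'"
    proof (cases "qsp (FB A B) (\<lambda>i. q i - m i)")
      case False thus ?thesis unfolding P_def Bq by auto
    next
      case True
      have mf: "minface A B (FB A B)" using FB_minface[OF BA] .
      have FBA: "FB A B \<subseteq> A" using mf qface_sub unfolding minface_def by blast
      have "rat_span_lattice (FB A B) = int_span (FB A B)" using hyp mf unfolding minface_def by blast
      from lemmaL[OF A mf this True] obtain T where
        T: "\<forall>n::('a\<Rightarrow>int)\<Rightarrow>nat. (\<forall>a\<in>B. n a \<ge> T) \<longrightarrow>
          (\<lambda>i. (\<Sum>a\<in>B. int (n a) * a i) + (q i - m i)) \<in> nat_span (FB A B)" by blast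
      have "\<forall>T'\<ge>T. P x T'"
      proof (intro allI impI)
        fix T' :: nat assume TT: "T \<le> T'"
        show "P x T'" unfolding P_def Bq fst_conv snd_conv
        proof (intro impI allI)
          fix n :: "('a \<Rightarrow> int) \<Rightarrow> nat" assume "\<forall>a\<in>B. T' \<le> n a"
          hence "\<forall>a\<in>B. T \<le> n a" using TT by (meson order_trans)
          from T this have "(\<lambda>i. (\<Sum>a\<in>B. int (n a) * a i) + (q i - m i)) \<in> nat_span (FB A B)" by blast
          thus "(\<lambda>i. (\<Sum>a\<in>B. int (n a) * a i) + (q i - m i)) \<in> nat_span A"
            by (rule ns_mono[OF A FBA])
        qed
      qed
      thus ?thesis by blast
    qed
  qed
  from uniform_bound[OF fin this] obtain T where T: "\<forall>x\<in>Sigma (Pow A) (Qs A K). \<forall>T'\<ge>T. P x T'" by blast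
  have "Good A m K (max K T)"
    unfolding Good_def
  proof (intro ballI impI allI)
    fix B q n assume B: "B \<in> Pow A" and q: "q \<in> Qs A K B" and sp: "qsp (FB A B) (\<lambda>i. q i - m i)"
      and n: "\<forall>a\<in>B. max K T \<le> n a"
    have "P (B, q) (max K T)" using T B q by auto
    thus "(\<lambda>i. (\<Sum>a\<in>B. int (n a) * a i) + (q i - m i)) \<in> nat_span A" using sp n unfolding P_def by auto
  qed
  thus ?thesis by (intro exI[of _ "max K T"]) auto
qed

lemma Ks_props:
  assumes A: "finite A" and hyp: "\<forall>F. qface A F \<longrightarrow> rat_span_lattice F = int_span F"
  shows "Ks A m i \<le> Ks A m (Suc i) \<and> Good A m (Ks A m i) (Ks A m (Suc i))"
proof -
  have "Ks A m (Suc i) = nextK A m (Ks A m i)" unfolding Ks_def by simp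
  thus ?thesis unfolding nextK_def using someI_ex[OF good_ex[OF A hyp, of "Ks A m i" m]] by simp
qed

lemma qv_sum: "qv (\<lambda>j. \<Sum>a\<in>B. int (n a) * a j) = (\<lambda>j. \<Sum>a\<in>B. of_nat (n a) * qv a j)"
  unfolding qv_def by simp

lemma qv_diff: "qv (\<lambda>j. x j - q j) = (\<lambda>j. qv x j - 1 * qv q j)"
  unfolding qv_def by simp

lemma of_rat_qdot: "(of_rat (qdot W (qv v)) :: complex) = (\<Sum>j\<in>UNIV. of_rat (W j) * of_int (v j))"
  unfolding qdot_def qv_def by (simp add: of_rat_sum of_rat_mult)

lemma exists_poly:
  fixes A :: "('n::finite \<Rightarrow> int) set"
  assumes A: "finite A" and hyp: "\<forall>F. qface A F \<longrightarrow> rat_span_lattice F = int_span F"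
  shows "\<exists>\<phi>. pf \<phi> \<and> \<phi> m \<noteq> 0 \<and> (\<forall>x\<in>nat_span A. (\<lambda>i. x i - m i) \<notin> nat_span A \<longrightarrow> \<phi> x = 0)"
proof -
  define K where "K = Ks A m"
  have Kp: "K i \<le> K (Suc i)" "Good A m (K i) (K (Suc i))" for i
    unfolding K_def using Ks_props[OF A hyp] by auto
  define Idx where "Idx = {\<iota>. fst \<iota> \<le> card A \<and> fst (snd \<iota>) \<in> Pow A \<and> snd (snd \<iota>) \<in> Qs A (K (fst \<iota>)) (fst (snd \<iota>))
     \<and> \<not> qsp (FB A (fst (snd \<iota>))) (\<lambda>j. m j - snd (snd \<iota>) j)}"
  have finI: "finite Idx"
  proof (rule finite_subset)
    show "Idx \<subseteq> Sigma {..card A} (\<lambda>i. Sigma (Pow A) (Qs A (K i)))" unfolding Idx_def by auto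
    show "finite (Sigma {..card A} (\<lambda>i. Sigma (Pow A) (Qs A (K i))))"
      using A Qs_finite by (intro finite_SigmaI) auto
  qed
  define Wf where "Wf \<iota> = (SOME W. (\<forall>a\<in>FB A (fst (snd \<iota>)). qdot W (qv a) = 0) \<and>
      qdot W (qv (\<lambda>j. m j - snd (snd \<iota>) j)) \<noteq> 0)" for \<iota> :: "nat \<times> ('n \<Rightarrow> int) set \<times> ('n \<Rightarrow> int)"
  have Wf: "(\<forall>a\<in>FB A (fst (snd \<iota>)). qdot (Wf \<iota>) (qv a) = 0) \<and> qdot (Wf \<iota>) (qv (\<lambda>j. m j - snd (snd \<iota>) j)) \<noteq> 0"
    if "\<iota> \<in> Idx" for \<iota>
  proof -
    have BA: "fst (snd \<iota>) \<subseteq> A" using that unfolding Idx_def by auto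
    have "FB A (fst (snd \<iota>)) \<subseteq> A" using FB_minface[OF BA] qface_sub unfolding minface_def by blast
    hence fin: "finite (FB A (fst (snd \<iota>)))" using A finite_subset by blast
    have nq: "\<not> qsp (FB A (fst (snd \<iota>))) (\<lambda>j. m j - snd (snd \<iota>) j)" using that unfolding Idx_def by blast
    show ?thesis unfolding Wf_def by (rule someI_ex[OF farkas_span[OF fin nq]])
  qed
  define c0 where "c0 \<iota> = - (of_rat (qdot (Wf \<iota>) (qv (snd (snd \<iota>)))) :: complex)" for \<iota>
  define cj where "cj \<iota> j = (of_rat (Wf \<iota> j) :: complex)" for \<iota> j
  define \<phi> where "\<phi> = (\<lambda>x. \<Prod>\<iota>\<in>Idx. (c0 \<iota> + (\<Sum>j\<in>UNIV. cj \<iota> j * of_int (x j))))"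
  have fac: "c0 \<iota> + (\<Sum>j\<in>UNIV. cj \<iota> j * of_int (x j)) = of_rat (qdot (Wf \<iota>) (qv (\<lambda>j. x j - snd (snd \<iota>) j)))" for \<iota> x
    unfolding c0_def cj_def qv_diff qdot_diff_right by (simp add: of_rat_diff of_rat_qdot)
  have pfphi: "pf \<phi>" unfolding \<phi>_def using finI by (rule pf_prod)
  have nzphi: "\<phi> m \<noteq> 0"
  proof -
    have "\<forall>\<iota>\<in>Idx. c0 \<iota> + (\<Sum>j\<in>UNIV. cj \<iota> j * of_int (m j)) \<noteq> 0"
      unfolding fac using Wf by simp
    thus ?thesis unfolding \<phi>_def by (simp add: prod_zero_iff[OF finI])
  qed
  have van: "\<phi> x = 0" if x: "x \<in> nat_span A" and xm: "(\<lambda>i. x i - m i) \<notin> nat_span A" for x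
  proof -
    obtain n where n: "x = (\<lambda>i. \<Sum>a\<in>A. int (n a) * a i)" using x unfolding nat_span_def by blast
    obtain i where i: "i \<le> card A" "\<forall>a\<in>A. \<not> (K i \<le> n a \<and> n a < K (Suc i))"
      using pigeon[of A K n, OF A Kp(1)] by blast
    define B where "B = {a\<in>A. K (Suc i) \<le> n a}"
    define q where "q = (\<lambda>j. \<Sum>a\<in>A-B. int (n a) * a j)"
    have BA: "B \<subseteq> A" unfolding B_def by auto
    have "\<forall>a\<in>A-B. n a < K i" using i(2) unfolding B_def by auto
    hence qQ: "q \<in> Qs A (K i) B" unfolding q_def by (rule Qs_mem)
    have xs: "x = (\<lambda>j. (\<Sum>a\<in>B. int (n a) * a j) + q j)"
      unfolding n q_def by (rule ext) (subst sum.subset_diff[OF BA A], simp)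
    show ?thesis
    proof (cases "qsp (FB A B) (\<lambda>j. q j - m j)")
      case True
      have "\<forall>a\<in>B. n a \<ge> K (Suc i)" unfolding B_def by auto
      have G: "Good A m (K i) (K (Suc i))" by (rule Kp(2))
      have "\<forall>q\<in>Qs A (K i) B. qsp (FB A B) (\<lambda>j. q j - m j) \<longrightarrow>
         (\<forall>n. (\<forall>a\<in>B. n a \<ge> K (Suc i)) \<longrightarrow> (\<lambda>j. (\<Sum>a\<in>B. int (n a) * a j) + (q j - m j)) \<in> nat_span A)"
        using G BA unfolding Good_def by blast
      hence "qsp (FB A B) (\<lambda>j. q j - m j) \<longrightarrow>
         (\<forall>n. (\<forall>a\<in>B. n a \<ge> K (Suc i)) \<longrightarrow> (\<lambda>j. (\<Sum>a\<in>B. int (n a) * a j) + (q j - m j)) \<in> nat_span A)"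
        using qQ by (rule bspec)
      hence "\<forall>n. (\<forall>a\<in>B. n a \<ge> K (Suc i)) \<longrightarrow> (\<lambda>j. (\<Sum>a\<in>B. int (n a) * a j) + (q j - m j)) \<in> nat_span A"
        using True by (rule mp)
      hence "(\<forall>a\<in>B. n a \<ge> K (Suc i)) \<longrightarrow> (\<lambda>j. (\<Sum>a\<in>B. int (n a) * a j) + (q j - m j)) \<in> nat_span A"
        by (rule spec)
      hence "(\<lambda>j. (\<Sum>a\<in>B. int (n a) * a j) + (q j - m j)) \<in> nat_span A"
        using \<open>\<forall>a\<in>B. n a \<ge> K (Suc i)\<close> by (rule mp)
      moreover have "(\<lambda>j. (\<Sum>a\<in>B. int (n a) * a j) + (q j - m j)) = (\<lambda>j. x j - m j)"
        using xs by (auto simp: fun_eq_iff)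
      ultimately show ?thesis using xm by simp
    next
      case False
      have "\<not> qsp (FB A B) (\<lambda>j. m j - q j)"
      proof
        assume "qsp (FB A B) (\<lambda>j. m j - q j)"
        from qsp_neg[OF this] have "qsp (FB A B) (\<lambda>j. q j - m j)" by simp
        with False show False by simp
      qed
      hence \<iota>: "(i, B, q) \<in> Idx" unfolding Idx_def using i(1) BA qQ by auto
      have BF: "B \<subseteq> FB A B" using FB_minface[OF BA] unfolding minface_def by blast
      have "qdot (Wf (i, B, q)) (qv (\<lambda>j. x j - q j)) = 0"
      proof -
        have "(\<lambda>j. x j - q j) = (\<lambda>j. \<Sum>a\<in>B. int (n a) * a j)" using xs by (auto simp: fun_eq_iff)
        hence "qdot (Wf (i, B, q)) (qv (\<lambda>j. x j - q j)) = (\<Sum>a\<in>B. of_nat (n a) * qdot (Wf (i, B, q)) (qv a))"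
          by (simp add: qv_sum qdot_lin)
        also have "\<dots> = 0" using Wf[OF \<iota>] BF by (intro sum.neutral) auto
        finally show ?thesis .
      qed
      hence "c0 (i, B, q) + (\<Sum>j\<in>UNIV. cj (i, B, q) j * of_int (x j)) = 0" unfolding fac by simp
      hence "\<exists>\<iota>\<in>Idx. c0 \<iota> + (\<Sum>j\<in>UNIV. cj \<iota> j * of_int (x j)) = 0" using \<iota> by blast
      thus ?thesis unfolding \<phi>_def by (simp add: prod_zero_iff[OF finI])
    qed
  qed
  show ?thesis
    by (rule exI[of _ \<phi>]) (use pfphi nzphi van in auto)
qed



lemma mult_op:
  fixes A :: "('n::finite \<Rightarrow> int) set"
  assumes h: "h \<in> semigroup_ring A" and k: "\<kappa> \<noteq> 0"
  defines "Q \<equiv> (\<lambda>p::('n \<Rightarrow> int) \<times> ('n \<Rightarrow> nat). if snd p = (\<lambda>_. 0) then h (fst p) / \<kappa> else 0)"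
  shows "Q \<in> diff_ops_RA A" and "op_act Q (\<lambda>x. if x = (\<lambda>_. 0) then \<kappa> else 0) = h"
proof -
  have supp: "{p. Q p \<noteq> 0} \<subseteq> (\<lambda>a. (a, \<lambda>_. 0)) ` {a. h a \<noteq> 0}"
    unfolding Q_def by (auto split: if_splits intro!: image_eqI[where x="fst _"])
  have hfin: "finite {a. h a \<noteq> 0}" using h unfolding SR_iff by blast
  have Qfin: "finite {p. Q p \<noteq> 0}" using finite_subset[OF supp] hfin by blast
  hence Qd: "Q \<in> diff_ops" unfolding diff_ops_def by simp
  show "Q \<in> diff_ops_RA A"
    unfolding diff_ops_RA_def
  proof (intro CollectI conjI Qd ballI)
    fix f assume f: "f \<in> semigroup_ring A"
    have "op_act Q f \<in> laurent" using op_act_laurent[OF Qd] f unfolding semigroup_ring_def by blast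
    moreover have "y \<in> nat_span A" if y: "op_act Q f y \<noteq> 0" for y
    proof -
      obtain p u where pu: "Q p \<noteq> 0" "f u \<noteq> 0" "y = (\<lambda>i. fst p i + u i - int (snd p i))"
        using op_act_nz[OF y] by blast
      have s: "snd p = (\<lambda>_. 0)" and hp: "h (fst p) \<noteq> 0" using pu(1) unfolding Q_def by (auto split: if_splits)
      have "fst p \<in> nat_span A" using h hp unfolding SR_iff by blast
      moreover have "u \<in> nat_span A" using f pu(2) unfolding SR_iff by blast
      ultimately have "(\<lambda>i. fst p i + u i) \<in> nat_span A" by (rule ns_add)
      thus ?thesis using pu(3) s by simp
    qed
    ultimately show "op_act Q f \<in> semigroup_ring A" unfolding semigroup_ring_def by blast
  qed
  show "op_act Q (\<lambda>x. if x = (\<lambda>_. 0) then \<kappa> else 0) = h"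
  proof
    fix y
    have e: "{u. (if u = (\<lambda>_. 0::int) then \<kappa> else 0) \<noteq> 0} = {\<lambda>_. 0}" using k by auto
    have "op_act Q (\<lambda>x. if x = (\<lambda>_. 0) then \<kappa> else 0) y = \<kappa> * (\<Sum>p\<in>{p. Q p \<noteq> 0}.
      if (\<lambda>i. fst p i + 0 - int (snd p i)) = y then Q p * of_int (ffv (\<lambda>_. 0) (snd p)) else 0)"
      by (subst op_act_swap, subst e) simp
    also have "(\<Sum>p\<in>{p. Q p \<noteq> 0}. if (\<lambda>i. fst p i + 0 - int (snd p i)) = y then Q p * of_int (ffv (\<lambda>_. 0) (snd p)) else 0)
        = (\<Sum>p\<in>{p. Q p \<noteq> 0}. if p = (y, \<lambda>_. 0) then Q p else 0)"
    proof (rule sum.cong, simp)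
      fix p assume "p \<in> {p. Q p \<noteq> 0}"
      hence s: "snd p = (\<lambda>_. 0)" unfolding Q_def by (auto split: if_splits)
      obtain a b where p: "p = (a, b)" by (cases p)
      show "(if (\<lambda>i. fst p i + 0 - int (snd p i)) = y then Q p * of_int (ffv (\<lambda>_. 0) (snd p)) else 0) =
          (if p = (y, \<lambda>_. 0) then Q p else 0)"
        using s unfolding p by (simp add: ffv_zero)
    qed
    also have "\<dots> = (if (y, \<lambda>_. 0) \<in> {p. Q p \<noteq> 0} then Q (y, \<lambda>_. 0) else 0)"
      using Qfin by (simp add: sum.delta')
    also have "\<kappa> * \<dots> = h y" using k unfolding Q_def by auto
    finally show "op_act Q (\<lambda>x. if x = (\<lambda>_. 0) then \<kappa> else 0) y = h y" .
  qed
qed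

lemma shift_op:
  fixes A :: "('n::finite \<Rightarrow> int) set" and m :: "'n \<Rightarrow> int"
  assumes Bs: "finite Bs" and phi: "\<phi> = (\<lambda>x. \<Sum>b\<in>Bs. c b * of_int (ffv x b))"
  defines "P \<equiv> (\<lambda>p::('n \<Rightarrow> int) \<times> ('n \<Rightarrow> nat). if snd p \<in> Bs \<and> fst p = (\<lambda>i. int (snd p i) - m i) then c (snd p) else 0)"
  shows "P \<in> diff_ops" and "finite {u. f u \<noteq> 0} \<Longrightarrow> op_act P f y = f (\<lambda>i. y i + m i) * \<phi> (\<lambda>i. y i + m i)"
proof -
  define g where "g b = ((\<lambda>i. int (b i) - m i), b)" for b :: "'n \<Rightarrow> nat"
  have ginj: "inj g" unfolding g_def by (auto simp: inj_on_def)
  have supp: "{p. P p \<noteq> 0} = g ` {b\<in>Bs. c b \<noteq> 0}"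
    unfolding P_def g_def by (auto split: if_splits)
  have Pfin: "finite {p. P p \<noteq> 0}" unfolding supp using Bs by simp
  thus "P \<in> diff_ops" unfolding diff_ops_def by simp
  have inner: "(\<Sum>p\<in>{p. P p \<noteq> 0}. P p * of_int (ffv u (snd p))) = \<phi> u" for u
  proof -
    have "(\<Sum>p\<in>{p. P p \<noteq> 0}. P p * of_int (ffv u (snd p))) = (\<Sum>b\<in>{b\<in>Bs. c b \<noteq> 0}. P (g b) * of_int (ffv u (snd (g b))))"
      unfolding supp by (simp add: sum.reindex[OF inj_on_subset[OF ginj subset_UNIV]] comp_def)
    also have "\<dots> = (\<Sum>b\<in>{b\<in>Bs. c b \<noteq> 0}. c b * of_int (ffv u b))"
      by (rule sum.cong) (auto simp: P_def g_def)
    also have "\<dots> = (\<Sum>b\<in>Bs. c b * of_int (ffv u b))"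
      using Bs by (intro sum.mono_neutral_left) auto
    finally show ?thesis unfolding phi by simp
  qed
  assume ffin: "finite {u. f u \<noteq> 0}"
  have "op_act P f y = (\<Sum>u\<in>{u. f u \<noteq> 0}. f u * (if u = (\<lambda>i. y i + m i) then \<phi> u else 0))"
    unfolding op_act_swap
  proof (rule sum.cong, simp)
    fix u
    have "(\<Sum>p\<in>{p. P p \<noteq> 0}. if (\<lambda>i. fst p i + u i - int (snd p i)) = y then P p * of_int (ffv u (snd p)) else 0)
       = (\<Sum>p\<in>{p. P p \<noteq> 0}. if u = (\<lambda>i. y i + m i) then P p * of_int (ffv u (snd p)) else 0)"
    proof (rule sum.cong, simp)
      fix p assume "p \<in> {p. P p \<noteq> 0}"
      hence fp: "fst p = (\<lambda>i. int (snd p i) - m i)" unfolding P_def by (auto split: if_splits)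
      have "((\<lambda>i. fst p i + u i - int (snd p i)) = y) = (u = (\<lambda>i. y i + m i))"
        unfolding fp by (auto simp: fun_eq_iff algebra_simps)
      thus "(if (\<lambda>i. fst p i + u i - int (snd p i)) = y then P p * of_int (ffv u (snd p)) else 0) =
          (if u = (\<lambda>i. y i + m i) then P p * of_int (ffv u (snd p)) else 0)" by simp
    qed
    also have "\<dots> = (if u = (\<lambda>i. y i + m i) then \<phi> u else 0)"
      using inner[of u] by (simp add: if_distrib[symmetric] sum.If_cases) (auto)
    finally show "f u * (\<Sum>p\<in>{p. P p \<noteq> 0}. if (\<lambda>i. fst p i + u i - int (snd p i)) = y then P p * of_int (ffv u (snd p)) else 0)
        = f u * (if u = (\<lambda>i. y i + m i) then \<phi> u else 0)" by simp
  qed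
  also have "\<dots> = (\<Sum>u\<in>{u. f u \<noteq> 0}. if u = (\<lambda>i. y i + m i) then f u * \<phi> u else 0)"
    by (rule sum.cong) auto
  also have "\<dots> = f (\<lambda>i. y i + m i) * \<phi> (\<lambda>i. y i + m i)"
    using ffin by (simp add: sum.delta')
  finally show "op_act P f y = f (\<lambda>i. y i + m i) * \<phi> (\<lambda>i. y i + m i)" .
qed



lemma simple_if:
  fixes A :: "('n::finite \<Rightarrow> int) set"
  assumes A: "finite A" and hyp: "\<forall>F. qface A F \<longrightarrow> rat_span_lattice F = int_span F"
  shows "graded_simple A"
  unfolding graded_simple_def
proof (intro conjI allI impI)
  have "Dlt (\<lambda>_. 0) \<in> semigroup_ring A" by (rule Dlt_RA[OF ns_zero])
  moreover have "Dlt (\<lambda>_. 0) \<noteq> (\<lambda>_. 0)" unfolding Dlt_def by (metis one_neq_zero)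
  ultimately show "semigroup_ring A \<noteq> {\<lambda>_. 0}" by auto
next
  fix M assume M: "graded_submodule A M"
  have MR: "M \<subseteq> semigroup_ring A" and M0: "(\<lambda>_. 0) \<in> M"
    and Mop: "\<forall>P\<in>diff_ops_RA A. \<forall>f\<in>M. op_act P f \<in> M"
    and Mgr: "\<forall>f\<in>M. \<forall>m. (\<lambda>x. if x = m then f m else 0) \<in> M"
    using M unfolding graded_submodule_def by auto
  show "M = {\<lambda>_. 0} \<or> M = semigroup_ring A"
  proof (cases "M = {\<lambda>_. 0}")
    case True thus ?thesis by simp
  next
    case False
    then obtain f where f: "f \<in> M" "f \<noteq> (\<lambda>_. 0)" using M0 by blast
    then obtain m where fm: "f m \<noteq> 0" by auto
    have "f \<in> semigroup_ring A" using MR f(1) by blast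
    hence mS: "m \<in> nat_span A" using fm unfolding SR_iff by blast
    define g where "g = (\<lambda>x. if x = m then f m else 0)"
    have gM: "g \<in> M" unfolding g_def using Mgr f(1) by blast
    obtain \<phi> where \<phi>: "pf \<phi>" "\<phi> m \<noteq> 0" "\<forall>x\<in>nat_span A. (\<lambda>i. x i - m i) \<notin> nat_span A \<longrightarrow> \<phi> x = 0"
      using exists_poly[OF A hyp, of m] by blast
    obtain Bs c where Bs: "finite Bs" "\<phi> = (\<lambda>x. \<Sum>b\<in>Bs. c b * of_int (ffv x b))"
      using pf_D[OF \<phi>(1)] by (elim exE conjE)
    define P where "P = (\<lambda>p::('n \<Rightarrow> int) \<times> ('n \<Rightarrow> nat). if snd p \<in> Bs \<and> fst p = (\<lambda>i. int (snd p i) - m i) then c (snd p) else 0)"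
    have Pd: "P \<in> diff_ops" unfolding P_def by (rule shift_op(1)[OF Bs])
    have Pf: "op_act P f y = f (\<lambda>i. y i + m i) * \<phi> (\<lambda>i. y i + m i)" if "finite {u. f u \<noteq> 0}" for f y
      unfolding P_def by (rule shift_op(2)[OF Bs that])
    have PD: "P \<in> diff_ops_RA A"
      unfolding diff_ops_RA_def
    proof (intro CollectI conjI Pd ballI)
      fix h assume h: "h \<in> semigroup_ring A"
      have hfin: "finite {u. h u \<noteq> 0}" using h unfolding SR_iff by blast
      have "op_act P h \<in> laurent" using op_act_laurent[OF Pd] h unfolding semigroup_ring_def by blast
      moreover have "y \<in> nat_span A" if y: "op_act P h y \<noteq> 0" for y
      proof -
        have nz: "h (\<lambda>i. y i + m i) \<noteq> 0" "\<phi> (\<lambda>i. y i + m i) \<noteq> 0" using y Pf[OF hfin] by auto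
        have "(\<lambda>i. y i + m i) \<in> nat_span A" using h nz(1) unfolding SR_iff by blast
        hence "(\<lambda>i. (y i + m i) - m i) \<notin> nat_span A \<longrightarrow> \<phi> (\<lambda>i. y i + m i) = 0"
          using \<phi>(3) by (rule bspec[rotated])
        hence "(\<lambda>i. (y i + m i) - m i) \<in> nat_span A" using nz(2) by blast
        thus ?thesis by simp
      qed
      ultimately show "op_act P h \<in> semigroup_ring A" unfolding semigroup_ring_def by blast
    qed
    define \<kappa> where "\<kappa> = f m * \<phi> m"
    have k: "\<kappa> \<noteq> 0" unfolding \<kappa>_def using fm \<phi>(2) by simp
    have gfin: "finite {u. g u \<noteq> 0}"
    proof (rule finite_subset)
      show "{u. g u \<noteq> 0} \<subseteq> {m}" unfolding g_def by auto
    qed simp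
    have "op_act P g = (\<lambda>x. if x = (\<lambda>_. 0) then \<kappa> else 0)"
    proof
      fix y
      have "((\<lambda>i. y i + m i) = m) = (y = (\<lambda>_. 0))" by (auto simp: fun_eq_iff)
      thus "op_act P g y = (if y = (\<lambda>_. 0) then \<kappa> else 0)"
        unfolding Pf[OF gfin] unfolding g_def \<kappa>_def by auto
    qed
    moreover have "op_act P g \<in> M" using Mop PD gM by blast
    ultimately have dM: "(\<lambda>x. if x = (\<lambda>_. 0) then \<kappa> else 0) \<in> M" by simp
    have "semigroup_ring A \<subseteq> M"
    proof
      fix h assume h: "h \<in> semigroup_ring A"
      define Q where "Q = (\<lambda>p::('n \<Rightarrow> int) \<times> ('n \<Rightarrow> nat). if snd p = (\<lambda>_. 0) then h (fst p) / \<kappa> else 0)"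
      have "Q \<in> diff_ops_RA A" unfolding Q_def by (rule mult_op(1)[OF h k])
      moreover have "op_act Q (\<lambda>x. if x = (\<lambda>_. 0) then \<kappa> else 0) = h" unfolding Q_def by (rule mult_op(2)[OF h k])
      moreover have "op_act Q (\<lambda>x. if x = (\<lambda>_. 0) then \<kappa> else 0) \<in> M"
        using Mop \<open>Q \<in> diff_ops_RA A\<close> dM by blast
      ultimately show "h \<in> M" by simp
    qed
    thus ?thesis using MR by blast
  qed
qed

lemma real_pt_cone: "finite A \<Longrightarrow> a \<in> A \<Longrightarrow> real_pt a \<in> real_cone A"
  unfolding real_cone_def real_pt_def
proof (intro CollectI exI[of _ "\<lambda>b. if b = a then 1 else 0"] conjI ballI ext)
  fix i assume "finite A" "a \<in> A"
  have "(\<Sum>b\<in>A. (if b = a then 1 else 0) * real_of_int (b i)) = (\<Sum>b\<in>A. if b = a then real_of_int (a i) else 0)"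
    by (rule sum.cong) auto
  thus "real_of_int (a i) = (\<Sum>b\<in>A. (if b = a then 1 else 0) * real_of_int (b i))"
    using \<open>finite A\<close> \<open>a \<in> A\<close> by simp
qed auto

lemma rdot_qdot: "rdot (\<lambda>i. of_rat (W i)) a = of_rat (qdot W (qv a))"
  unfolding rdot_def qdot_def qv_def by (simp add: of_rat_sum of_rat_mult)

theorem proposition8p10:
  fixes A :: "('n::finite \<Rightarrow> int) set"
  assumes "finite A"
    and "int_span A = UNIV"
  shows "graded_simple A \<longleftrightarrow>
    (\<forall>\<tau>. is_face (real_cone A) \<tau> \<longrightarrow>
       rat_span_lattice {a\<in>A. real_pt a \<in> \<tau>} = int_span {a\<in>A. real_pt a \<in> \<tau>})"
proof
  assume gs: "graded_simple A"
  show "\<forall>\<tau>. is_face (real_cone A) \<tau> \<longrightarrow>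
       rat_span_lattice {a\<in>A. real_pt a \<in> \<tau>} = int_span {a\<in>A. real_pt a \<in> \<tau>}"
  proof (intro allI impI)
    fix \<tau> assume "is_face (real_cone A) \<tau>"
    then obtain w where w: "\<forall>x\<in>real_cone A. (\<Sum>i\<in>UNIV. w i * x i) \<ge> 0"
      "\<tau> = {x\<in>real_cone A. (\<Sum>i\<in>UNIV. w i * x i) = 0}" unfolding is_face_def by blast
    have rd: "rdot w a = (\<Sum>i\<in>UNIV. w i * real_pt a i)" for a unfolding rdot_def real_pt_def by simp
    have wA: "\<forall>a\<in>A. rdot w a \<ge> 0" using w(1) real_pt_cone[OF assms(1)] rd by auto
    have eq: "{a\<in>A. real_pt a \<in> \<tau>} = {a\<in>A. rdot w a = 0}" using w(2) real_pt_cone[OF assms(1)] rd by auto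
    show "rat_span_lattice {a\<in>A. real_pt a \<in> \<tau>} = int_span {a\<in>A. real_pt a \<in> \<tau>}"
      unfolding eq
    proof (rule ccontr)
      assume ne: "rat_span_lattice {a\<in>A. rdot w a = 0} \<noteq> int_span {a\<in>A. rdot w a = 0}"
      from not_simple[OF assms wA ne] gs show False by simp
    qed
  qed
next
  assume H: "\<forall>\<tau>. is_face (real_cone A) \<tau> \<longrightarrow>
       rat_span_lattice {a\<in>A. real_pt a \<in> \<tau>} = int_span {a\<in>A. real_pt a \<in> \<tau>}"
  have hyp: "\<forall>F. qface A F \<longrightarrow> rat_span_lattice F = int_span F"
  proof (intro allI impI)
    fix F assume "qface A F"
    then obtain W where W: "\<forall>a\<in>A. qdot W (qv a) \<ge> 0" "F = {a\<in>A. qdot W (qv a) = 0}"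
      unfolding qface_def by blast
    define w where "w = (\<lambda>i. (of_rat (W i) :: real))"
    define \<tau> where "\<tau> = {x\<in>real_cone A. (\<Sum>i\<in>UNIV. w i * x i) = 0}"
    have face: "is_face (real_cone A) \<tau>"
      unfolding is_face_def
    proof (intro exI[of _ w] conjI ballI)
      fix x assume "x \<in> real_cone A"
      then obtain l where l: "\<forall>a\<in>A. l a \<ge> 0" "x = (\<lambda>i. \<Sum>a\<in>A. l a * of_int (a i))"
        unfolding real_cone_def by blast
      have "(\<Sum>i\<in>UNIV. w i * x i) = (\<Sum>a\<in>A. l a * rdot w a)"
        unfolding l(2) rdot_def by (rule sum_swap_lin)
      also have "\<dots> \<ge> 0"
        using l(1) W(1) unfolding w_def rdot_qdot by (intro sum_nonneg mult_nonneg_nonneg) auto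
      finally show "(\<Sum>i\<in>UNIV. w i * x i) \<ge> 0" .
    qed (simp add: \<tau>_def)
    have "{a\<in>A. real_pt a \<in> \<tau>} = F"
    proof -
      have "(\<Sum>i\<in>UNIV. w i * real_pt a i) = of_rat (qdot W (qv a))" for a
        using rdot_qdot[of W a] unfolding rdot_def real_pt_def w_def by simp
      thus ?thesis unfolding \<tau>_def W(2) using real_pt_cone[OF assms(1)] by auto
    qed
    moreover have "rat_span_lattice {a\<in>A. real_pt a \<in> \<tau>} = int_span {a\<in>A. real_pt a \<in> \<tau>}"
      using H face by blast
    ultimately show "rat_span_lattice F = int_span F" by simp
  qed
  show "graded_simple A" by (rule simple_if[OF assms(1) hyp])
qed

end
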